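(* Let $H=(V,E)$ be a hypergraph whose vertex set $V$ is a partition of $[n]$ into sets of cardinality at least $2$, and suppose $H$ is $\alpha$-acyclic. Let $T=(E,\mathcal{E})$ be a join tree of $H$. Then \[ \mathrm{MC}^H=\Big\{w\in \mathbb{R}_{\geq 0}^{\mathcal{J}^H}\ \Big|\ w(I)=1\ \forall\, I\in V;\quad w_i - \sum_{J\in \mathcal{J}^e:\, J\ni i}w_J = 0\ \ \forall\, e\in E,\ \forall\, i\in I\in e; \] \[ \sum_{J\in \mathcal{J}^e:\, J\supseteq J_0} w_J -\sum_{J\in \mathcal{J}^{e'}:\, J\supseteq J_0}w_J = 0\ \ \forall\, \{e,e'\}\in \mathcal{E} \text{ with } |e\cap e'|>1,\ \forall\, J_0\in \mathcal{J}^{e\cap e'}\Big\}. \]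
   Context: Let $n$ be a positive integer, $[n]=\{1,\dots,n\}$. A hypergraph $H=(V,E)$ here has as vertex set $V$ a family of pairwise disjoint subsets of $[n]$, each of cardinality at least $2$, and hyperedge set $E$ consisting of subsets $e\subseteq V$ with $|e|\ge 2$. Write $L(V)=\{\{I\}: I\in V\}$. For a nonempty $e\subseteq V$, $\mathcal{J}^e$ denotes the family of sets $J\subseteq \bigcup_{I\in e} I$ with $|J\cap I|=1$ for every $I\in e$. Let $\mathcal{J}^H=\bigcup_{e\in L(V)\cup E}\mathcal{J}^e$ (it contains every singleton $\{i\}$, $i\in\bigcup V$). For $w\in\mathbb{R}^{\mathcal{J}^H}$ write $w_i=w_{\{i\}}$ and $w(A)=\sum_{i\in A}w_i$. Let $\mathscr{S}^H=\{w\in\{0,1\}^{\mathcal{J}^H}: w(I)=1\ \forall I\in V;\ w_J=\prod_{i\in J}w_i\ \forall J\in\mathcal{J}^H, |J|>1\}$ and $\mathrm{MC}^H=\operatorname{conv}\mathscr{S}^H$. A join tree of $H$ is a tree $T$ with node set $E$ such that for any two distinct nodes $e_1,e_2$, every node $e$ on the unique path in $T$ between them satisfies $e_1\cap e_2\subseteq e$. $H$ is $\alpha$-acyclic in the sense of Fagin; equivalently (Beeri et al.) $H$ admits a join tree. *)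

theory Defs
  imports "HOL-Analysis.Analysis"
begin

(* Points of R^{J^H} are represented as functions  nat set => real  that vanish
   outside the index set J^H (extensional representation). *)

definition conv_fun :: "('a \<Rightarrow> real) set \<Rightarrow> ('a \<Rightarrow> real) set" where
  "conv_fun S = {w. \<exists>F c. finite F \<and> F \<subseteq> S \<and> F \<noteq> {} \<and> (\<forall>s\<in>F. c s \<ge> (0::real)) \<and>
                    sum c F = 1 \<and> w = (\<lambda>x. (\<Sum>s\<in>F. c s * s x))}"

definition partition_ge2 :: "nat \<Rightarrow> nat set set \<Rightarrow> bool" where
  "partition_ge2 n V \<longleftrightarrow> \<Union>V = {1..n} \<and> (\<forall>I\<in>V. card I \<ge> 2) \<and>
      (\<forall>I\<in>V. \<forall>I'\<in>V. I \<noteq> I' \<longrightarrow> I \<inter> I' = {})"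

definition hyperedges_ok :: "nat set set \<Rightarrow> nat set set set \<Rightarrow> bool" where
  "hyperedges_ok V E \<longleftrightarrow> (\<forall>e\<in>E. e \<subseteq> V \<and> card e \<ge> 2)"

definition Jfam :: "nat set set \<Rightarrow> nat set set" where
  "Jfam e = {J. J \<subseteq> \<Union>e \<and> (\<forall>I\<in>e. card (J \<inter> I) = 1)}"

definition Lset :: "nat set set \<Rightarrow> nat set set set" where
  "Lset V = {{I} | I. I \<in> V}"

definition JH :: "nat set set \<Rightarrow> nat set set set \<Rightarrow> nat set set" where
  "JH V E = (\<Union>e\<in>Lset V \<union> E. Jfam e)"

definition wsum :: "(nat set \<Rightarrow> real) \<Rightarrow> nat set \<Rightarrow> real" where
  "wsum w A = (\<Sum>i\<in>A. w {i})"

definition SH :: "nat set set \<Rightarrow> nat set set set \<Rightarrow> (nat set \<Rightarrow> real) set" where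
  "SH V E = {w. (\<forall>J. J \<notin> JH V E \<longrightarrow> w J = 0) \<and>
                (\<forall>J\<in>JH V E. w J \<in> {0, 1}) \<and>
                (\<forall>I\<in>V. wsum w I = 1) \<and>
                (\<forall>J\<in>JH V E. card J > 1 \<longrightarrow> w J = (\<Prod>i\<in>J. w {i}))}"

definition MC :: "nat set set \<Rightarrow> nat set set set \<Rightarrow> (nat set \<Rightarrow> real) set" where
  "MC V E = conv_fun (SH V E)"

definition is_walk :: "'a set set \<Rightarrow> 'a list \<Rightarrow> bool" where
  "is_walk T p \<longleftrightarrow> p \<noteq> [] \<and> (\<forall>k. Suc k < length p \<longrightarrow> {p ! k, p ! Suc k} \<in> T)"

definition is_path :: "'a set set \<Rightarrow> 'a list \<Rightarrow> bool" where
  "is_path T p \<longleftrightarrow> is_walk T p \<and> distinct p"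

definition is_cycle :: "'a set set \<Rightarrow> 'a list \<Rightarrow> bool" where
  "is_cycle T p \<longleftrightarrow> is_path T p \<and> length p \<ge> 3 \<and> {last p, hd p} \<in> T"

definition is_tree :: "'a set \<Rightarrow> 'a set set \<Rightarrow> bool" where
  "is_tree N T \<longleftrightarrow> finite N \<and>
     (\<forall>t\<in>T. \<exists>a b. a \<in> N \<and> b \<in> N \<and> a \<noteq> b \<and> t = {a, b}) \<and>
     (\<forall>a\<in>N. \<forall>b\<in>N. \<exists>p. is_walk T p \<and> hd p = a \<and> last p = b) \<and>
     (\<nexists>p. is_cycle T p)"

definition is_join_tree :: "nat set set set \<Rightarrow> nat set set set set \<Rightarrow> bool" where
  "is_join_tree E T \<longleftrightarrow> is_tree E T \<and>
     (\<forall>p. is_path T p \<longrightarrow> hd p \<noteq> last p \<longrightarrow>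
          (\<forall>e\<in>set p. hd p \<inter> last p \<subseteq> e))"

(* alpha-acyclicity, via the Beeri et al. characterization: existence of a join tree *)
definition alpha_acyclic :: "nat set set \<Rightarrow> nat set set set \<Rightarrow> bool" where
  "alpha_acyclic V E \<longleftrightarrow> (\<exists>T. is_join_tree E T)"

definition MCdesc :: "nat set set \<Rightarrow> nat set set set \<Rightarrow> nat set set set set \<Rightarrow> (nat set \<Rightarrow> real) set" where
  "MCdesc V E T = {w.
     (\<forall>J. J \<notin> JH V E \<longrightarrow> w J = 0) \<and>
     (\<forall>J\<in>JH V E. w J \<ge> 0) \<and>
     (\<forall>I\<in>V. wsum w I = 1) \<and>
     (\<forall>e\<in>E. \<forall>I\<in>e. \<forall>i\<in>I. w {i} - (\<Sum>J\<in>{J\<in>Jfam e. i \<in> J}. w J) = 0) \<and>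
     (\<forall>e e'. {e, e'} \<in> T \<longrightarrow> card (e \<inter> e') > 1 \<longrightarrow>
        (\<forall>J0\<in>Jfam (e \<inter> e').
           (\<Sum>J\<in>{J\<in>Jfam e. J0 \<subseteq> J}. w J) - (\<Sum>J\<in>{J\<in>Jfam e'. J0 \<subseteq> J}. w J) = 0))}"

end

theory Submission
  imports Defs
begin

definition pdisj :: "nat set set \<Rightarrow> bool" where
  "pdisj V \<longleftrightarrow> (\<forall>I\<in>V. \<forall>I'\<in>V. I \<noteq> I' \<longrightarrow> I \<inter> I' = {})"

definition mg :: "nat set set \<Rightarrow> (nat set \<Rightarrow> real) \<Rightarrow> nat set \<Rightarrow> real" where
  "mg U f J0 = sum f {K\<in>Jfam U. J0 \<subseteq> K}"

lemma Jfam_finite: "finite U \<Longrightarrow> (\<forall>I\<in>U. finite I) \<Longrightarrow> finite (Jfam U)"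
  by (rule finite_subset[of _ "Pow (\<Union>U)"]) (auto simp: Jfam_def)

lemma Jfam_empty: "Jfam {} = {{}}" by (auto simp: Jfam_def)

lemma Jfam_single: "Jfam {I} = (\<lambda>i. {i}) ` I"
proof -
  have "J \<in> Jfam {I} \<longleftrightarrow> (\<exists>i\<in>I. J = {i})" for J
  proof
    assume "J \<in> Jfam {I}"
    then have "J \<subseteq> I" "card (J \<inter> I) = 1" by (auto simp: Jfam_def)
    then have "card J = 1" by (simp add: Int_absorb2)
    then obtain i where "J = {i}" by (rule card_1_singletonE)
    then show "\<exists>i\<in>I. J = {i}" using \<open>J \<subseteq> I\<close> by auto
  qed (auto simp: Jfam_def)
  then show ?thesis by auto
qed

lemma Jfam_restrict: "K \<in> Jfam U \<Longrightarrow> S \<subseteq> U \<Longrightarrow> K \<inter> \<Union>S \<in> Jfam S"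
proof -
  assume a: "K \<in> Jfam U" "S \<subseteq> U"
  have "K \<inter> \<Union>S \<inter> I = K \<inter> I" if "I \<in> S" for I using that by auto
  then show ?thesis using a by (auto simp: Jfam_def)
qed

lemma Jfam_sub_iff:
  assumes "K \<in> Jfam U" "J0 \<in> Jfam S" "S \<subseteq> U"
  shows "J0 \<subseteq> K \<longleftrightarrow> K \<inter> \<Union>S = J0"
proof
  assume sub: "J0 \<subseteq> K"
  have "K \<inter> \<Union>S \<subseteq> J0"
  proof
    fix x assume "x \<in> K \<inter> \<Union>S"
    then obtain I where I: "I \<in> S" "x \<in> K" "x \<in> I" by auto
    have c1: "card (K \<inter> I) = 1" using assms I by (auto simp: Jfam_def)
    have c2: "card (J0 \<inter> I) = 1" using assms I by (auto simp: Jfam_def)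
    have "J0 \<inter> I \<subseteq> K \<inter> I" using sub by auto
    moreover have "finite (K \<inter> I)" using c1 by (metis card.infinite zero_neq_one)
    ultimately have "J0 \<inter> I = K \<inter> I" using c1 c2 by (simp add: card_subset_eq)
    then show "x \<in> J0" using I by auto
  qed
  moreover have "J0 \<subseteq> \<Union>S" using assms by (auto simp: Jfam_def)
  ultimately show "K \<inter> \<Union>S = J0" using sub by auto
qed auto

lemma Jfam_glue:
  assumes "pdisj V" "A \<subseteq> V" "B \<subseteq> V" "KA \<in> Jfam A" "KB \<in> Jfam B"
    "KA \<inter> \<Union>(A\<inter>B) = KB \<inter> \<Union>(A\<inter>B)"
  shows "KA \<union> KB \<in> Jfam (A \<union> B)" "(KA \<union> KB) \<inter> \<Union>A = KA" "(KA \<union> KB) \<inter> \<Union>B = KB"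
proof -
  have kA: "KA \<subseteq> \<Union>A" and kB: "KB \<subseteq> \<Union>B" using assms by (auto simp: Jfam_def)
  have 1: "KB \<inter> \<Union>A \<subseteq> KA"
  proof
    fix x assume "x \<in> KB \<inter> \<Union>A"
    then obtain I I' where "I \<in> A" "x \<in> I" "I' \<in> B" "x \<in> I'" "x \<in> KB" using kB by auto
    moreover then have "I = I'" using assms(1-3) unfolding pdisj_def by blast
    ultimately have "x \<in> KB \<inter> \<Union>(A\<inter>B)" by auto
    then show "x \<in> KA" using assms(6) by auto
  qed
  have 2: "KA \<inter> \<Union>B \<subseteq> KB"
  proof
    fix x assume "x \<in> KA \<inter> \<Union>B"
    then obtain I I' where "I \<in> A" "x \<in> I" "I' \<in> B" "x \<in> I'" "x \<in> KA" using kA by auto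
    moreover then have "I = I'" using assms(1-3) unfolding pdisj_def by blast
    ultimately have "x \<in> KA \<inter> \<Union>(A\<inter>B)" by auto
    then show "x \<in> KB" using assms(6) by auto
  qed
  show eA: "(KA \<union> KB) \<inter> \<Union>A = KA" using 1 kA by auto
  show eB: "(KA \<union> KB) \<inter> \<Union>B = KB" using 2 kB by auto
  show "KA \<union> KB \<in> Jfam (A \<union> B)"
    unfolding Jfam_def
  proof (intro CollectI conjI ballI)
    show "KA \<union> KB \<subseteq> \<Union>(A \<union> B)" using kA kB by auto
    fix I assume "I \<in> A \<union> B"
    then show "card ((KA \<union> KB) \<inter> I) = 1"
    proof
      assume "I \<in> A"
      then have "(KA \<union> KB) \<inter> I = ((KA \<union> KB) \<inter> \<Union>A) \<inter> I" by auto
      then show ?thesis using eA assms(4) \<open>I \<in> A\<close> by (auto simp: Jfam_def)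
    next
      assume "I \<in> B"
      then have "(KA \<union> KB) \<inter> I = ((KA \<union> KB) \<inter> \<Union>B) \<inter> I" by auto
      then show ?thesis using eB assms(5) \<open>I \<in> B\<close> by (auto simp: Jfam_def)
    qed
  qed
qed

lemma mg_trans:
  assumes fin: "finite U" "\<forall>I\<in>U. finite I" and "S \<subseteq> R" "R \<subseteq> U" "J0 \<in> Jfam S"
  shows "mg U f J0 = sum (mg U f) {J\<in>Jfam R. J0 \<subseteq> J}"
proof -
  let ?S = "{K\<in>Jfam U. J0 \<subseteq> K}" and ?T = "{J\<in>Jfam R. J0 \<subseteq> J}"
  have fR: "finite R" "\<forall>I\<in>R. finite I" using fin assms(4) finite_subset by auto
  have fS: "finite ?S" using Jfam_finite[OF fin] by auto
  have fT: "finite ?T" using Jfam_finite[OF fR] by auto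
  have J0S: "J0 \<subseteq> \<Union>S" using assms(5) by (auto simp: Jfam_def)
  have "\<Union>S \<subseteq> \<Union>R" using assms(3) by auto
  then have J0R: "J0 \<subseteq> \<Union>R" using J0S by auto
  have img: "(\<lambda>K. K \<inter> \<Union>R) ` ?S \<subseteq> ?T"
    using Jfam_restrict[of _ U R] assms(4) J0R by auto
  have eq: "{x\<in>?S. x \<inter> \<Union>R = y} = {K\<in>Jfam U. y \<subseteq> K}" if "y \<in> ?T" for y
  proof -
    have "K \<inter> \<Union>R = y \<longleftrightarrow> y \<subseteq> K" if "K \<in> Jfam U" for K
      using Jfam_sub_iff[OF that _ assms(4), of y] \<open>y \<in> ?T\<close> by auto
    then show ?thesis using \<open>y \<in> ?T\<close> by auto
  qed
  have "sum f ?S = (\<Sum>y\<in>?T. sum f {x\<in>?S. x \<inter> \<Union>R = y})"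
    using sum.group[OF fS fT img, of f] by simp
  also have "\<dots> = sum (mg U f) ?T"
  proof (rule sum.cong[OF refl])
    fix y assume y: "y \<in> ?T"
    show "sum f {x\<in>?S. x \<inter> \<Union>R = y} = mg U f y"
      unfolding mg_def by (rule arg_cong[where f="sum f"], rule eq[OF y])
  qed
  finally show ?thesis by (simp add: mg_def)
qed

lemma glue_sum:
  assumes "pdisj V" "A \<subseteq> V" "B \<subseteq> V" "KA \<in> Jfam A"
  shows "sum (\<lambda>K. g (K \<inter> \<Union>B)) {K\<in>Jfam (A\<union>B). KA \<subseteq> K}
       = sum g {KB\<in>Jfam B. KA \<inter> \<Union>(A\<inter>B) \<subseteq> KB}"
proof (rule sum.reindex_bij_betw, rule bij_betw_byWitness[where f'="\<lambda>KB. KA \<union> KB"])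
  let ?L = "{K\<in>Jfam (A\<union>B). KA \<subseteq> K}" and ?R = "{KB\<in>Jfam B. KA \<inter> \<Union>(A\<inter>B) \<subseteq> KB}"
  have split: "K = (K \<inter> \<Union>A) \<union> (K \<inter> \<Union>B)" if "K \<in> Jfam (A\<union>B)" for K
    using that by (auto simp: Jfam_def)
  have rA: "K \<inter> \<Union>A = KA" if "K \<in> ?L" for K
    using that Jfam_sub_iff[of K "A\<union>B" KA A] assms(4) by auto
  show "\<forall>a\<in>?L. KA \<union> a \<inter> \<Union> B = a"
  proof
    fix a assume a: "a \<in> ?L"
    have "a = (a \<inter> \<Union>A) \<union> (a \<inter> \<Union>B)" using split a by blast
    also have "\<dots> = KA \<union> (a \<inter> \<Union>B)" using rA[OF a] by simp
    finally show "KA \<union> a \<inter> \<Union> B = a" by simp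
  qed
  have c: "KB \<inter> \<Union>(A\<inter>B) = KA \<inter> \<Union>(A\<inter>B)" if "KB \<in> ?R" for KB
  proof -
    have "KA \<inter> \<Union>(A\<inter>B) \<in> Jfam (A\<inter>B)" using Jfam_restrict[OF assms(4)] by auto
    then show ?thesis using Jfam_sub_iff[of KB B "KA \<inter> \<Union>(A\<inter>B)" "A\<inter>B"] that by auto
  qed
  have g: "KA \<union> KB \<in> Jfam (A \<union> B) \<and> (KA \<union> KB) \<inter> \<Union>A = KA \<and> (KA \<union> KB) \<inter> \<Union>B = KB"
    if "KB \<in> ?R" for KB
    using Jfam_glue[OF assms(1-4), of KB] c[OF that] that by auto
  show "\<forall>a'\<in>?R. (KA \<union> a') \<inter> \<Union> B = a'" using g by auto
  show "(\<lambda>K. K \<inter> \<Union> B) ` ?L \<subseteq> ?R"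
  proof
    fix y assume "y \<in> (\<lambda>K. K \<inter> \<Union> B) ` ?L"
    then obtain K where K: "K \<in> ?L" "y = K \<inter> \<Union>B" by auto
    have "y \<in> Jfam B" using Jfam_restrict[of K "A\<union>B" B] K by auto
    moreover have "KA \<inter> \<Union>(A\<inter>B) \<subseteq> y" using K by auto
    ultimately show "y \<in> ?R" by auto
  qed
  show "(\<lambda>KB. KA \<union> KB) ` ?R \<subseteq> ?L" using g by auto
qed

lemma glue:
  assumes pd: "pdisj V" and fV: "finite V" "\<forall>I\<in>V. finite I" and AB: "A \<subseteq> V" "B \<subseteq> V"
    and Pnn: "\<forall>K\<in>Jfam A. P' K \<ge> 0" and mnn: "\<forall>J\<in>Jfam B. \<mu> J \<ge> 0"
    and cons: "\<forall>J0\<in>Jfam (A\<inter>B). mg A P' J0 = mg B \<mu> J0"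
    and Pdef: "P = (\<lambda>K. P' (K \<inter> \<Union>A) * \<mu> (K \<inter> \<Union>B) / mg B \<mu> (K \<inter> \<Union>(A\<inter>B)))"
  shows "\<forall>K\<in>Jfam (A\<union>B). P K \<ge> 0"
    and "\<And>e J. e \<subseteq> A \<Longrightarrow> J \<in> Jfam e \<Longrightarrow> mg (A\<union>B) P J = mg A P' J"
    and "\<And>J. J \<in> Jfam B \<Longrightarrow> mg (A\<union>B) P J = \<mu> J"
proof -
  have fA: "finite A" "\<forall>I\<in>A. finite I" using fV AB finite_subset by auto
  have fB: "finite B" "\<forall>I\<in>B. finite I" using fV AB finite_subset by auto
  have fAB: "finite (A\<union>B)" "\<forall>I\<in>A\<union>B. finite I" using fA fB by auto
  have mgnn: "mg B \<mu> J0 \<ge> 0" for J0 unfolding mg_def using mnn by (auto intro: sum_nonneg)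
  show "\<forall>K\<in>Jfam (A\<union>B). P K \<ge> 0"
  proof
    fix K assume K: "K \<in> Jfam (A\<union>B)"
    have "K \<inter> \<Union>A \<in> Jfam A" "K \<inter> \<Union>B \<in> Jfam B" using Jfam_restrict[OF K] by auto
    then show "P K \<ge> 0" unfolding Pdef using Pnn mnn mgnn by auto
  qed
  show "mg (A\<union>B) P J = mg A P' J" if e: "e \<subseteq> A" "J \<in> Jfam e" for e J
  proof -
    have key: "mg (A\<union>B) P KA = P' KA" if KA: "KA \<in> Jfam A" for KA
    proof -
      define m0 where "m0 = mg B \<mu> (KA \<inter> \<Union>(A\<inter>B))"
      have "mg (A\<union>B) P KA = sum (\<lambda>K. P' KA / m0 * \<mu> (K \<inter> \<Union>B)) {K\<in>Jfam (A\<union>B). KA \<subseteq> K}"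
        unfolding mg_def
      proof (rule sum.cong[OF refl])
        fix K assume K: "K \<in> {K\<in>Jfam (A\<union>B). KA \<subseteq> K}"
        have r: "K \<inter> \<Union>A = KA" using Jfam_sub_iff[of K "A\<union>B" KA A] KA K by auto
        have "K \<inter> \<Union>(A\<inter>B) = (K \<inter> \<Union>A) \<inter> \<Union>(A\<inter>B)" by auto
        then have "K \<inter> \<Union>(A\<inter>B) = KA \<inter> \<Union>(A\<inter>B)" using r by simp
        then show "P K = P' KA / m0 * \<mu> (K \<inter> \<Union>B)" unfolding Pdef m0_def using r by simp
      qed
      also have "\<dots> = P' KA / m0 * sum (\<lambda>K. \<mu> (K \<inter> \<Union>B)) {K\<in>Jfam (A\<union>B). KA \<subseteq> K}"
        by (simp add: sum_distrib_left)
      also have "\<dots> = P' KA / m0 * m0"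
        using glue_sum[OF pd AB KA, of \<mu>] by (simp add: m0_def mg_def)
      also have "\<dots> = P' KA"
      proof (cases "m0 = 0")
        case True
        have "KA \<inter> \<Union>(A\<inter>B) \<in> Jfam (A\<inter>B)" using Jfam_restrict[OF KA] by auto
        then have "mg A P' (KA \<inter> \<Union>(A\<inter>B)) = 0" using cons True m0_def by auto
        moreover have "P' KA \<le> mg A P' (KA \<inter> \<Union>(A\<inter>B))"
          unfolding mg_def
          by (rule member_le_sum) (use KA Pnn Jfam_finite[OF fA] in auto)
        ultimately have "P' KA = 0" using Pnn KA by fastforce
        then show ?thesis by simp
      qed simp
      finally show ?thesis .
    qed
    have "mg (A\<union>B) P J = sum (mg (A\<union>B) P) {KA\<in>Jfam A. J \<subseteq> KA}"
      using mg_trans[OF fAB e(1) _ e(2)] by auto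
    also have "\<dots> = sum P' {KA\<in>Jfam A. J \<subseteq> KA}"
      by (rule sum.cong) (auto simp: key)
    finally show ?thesis by (simp add: mg_def)
  qed
  show "mg (A\<union>B) P J = \<mu> J" if J: "J \<in> Jfam B" for J
  proof -
    define m0 where "m0 = mg B \<mu> (J \<inter> \<Union>(A\<inter>B))"
    have "mg (A\<union>B) P J = sum (\<lambda>K. P' (K \<inter> \<Union>A) * (\<mu> J / m0)) {K\<in>Jfam (B\<union>A). J \<subseteq> K}"
      unfolding mg_def
    proof (rule sum.cong)
      show "{K \<in> Jfam (A \<union> B). J \<subseteq> K} = {K \<in> Jfam (B \<union> A). J \<subseteq> K}" by (simp add: Un_commute)
      fix K assume K: "K \<in> {K\<in>Jfam (B\<union>A). J \<subseteq> K}"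
      have r: "K \<inter> \<Union>B = J" using Jfam_sub_iff[of K "B\<union>A" J B] J K by auto
      have "K \<inter> \<Union>(A\<inter>B) = (K \<inter> \<Union>B) \<inter> \<Union>(A\<inter>B)" by auto
      then have "K \<inter> \<Union>(A\<inter>B) = J \<inter> \<Union>(A\<inter>B)" using r by simp
      then show "P K = P' (K \<inter> \<Union>A) * (\<mu> J / m0)" unfolding Pdef m0_def using r by simp
    qed
    also have "\<dots> = sum (\<lambda>K. P' (K \<inter> \<Union>A)) {K\<in>Jfam (B\<union>A). J \<subseteq> K} * (\<mu> J / m0)"
      by (rule sum_distrib_right[symmetric])
    also have "\<dots> = mg A P' (J \<inter> \<Union>(A\<inter>B)) * (\<mu> J / m0)"
      using glue_sum[OF pd AB(2,1) J, of P'] by (simp add: mg_def Int_commute)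
    also have "\<dots> = m0 * (\<mu> J / m0)"
    proof -
      have "J \<inter> \<Union>(A\<inter>B) \<in> Jfam (A\<inter>B)" using Jfam_restrict[OF J, of "A\<inter>B"] by auto
      then show ?thesis using cons m0_def by auto
    qed
    also have "\<dots> = \<mu> J"
    proof (cases "m0 = 0")
      case True
      have "\<mu> J \<le> m0"
        unfolding mg_def m0_def
        by (rule member_le_sum) (use J mnn Jfam_finite[OF fB] in auto)
      then have "\<mu> J = 0" using mnn J True by fastforce
      then show ?thesis by simp
    qed simp
    finally show ?thesis .
  qed
qed

lemma list_glue:
  assumes pd: "pdisj V" and fV: "finite V" "\<forall>I\<in>V. finite I"
  shows "(\<forall>e\<in>set es. e \<subseteq> V) \<Longrightarrow> (\<forall>e\<in>set es. \<forall>J\<in>Jfam e. w J \<ge> 0) \<Longrightarrow>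
     (\<forall>e\<in>set es. sum w (Jfam e) = 1) \<Longrightarrow>
     (\<forall>k<length es. es!k \<inter> \<Union>(set (take k es)) = {} \<or>
        (\<exists>j<k. es!k \<inter> \<Union>(set (take k es)) \<subseteq> es!j \<and>
           (\<forall>J0\<in>Jfam (es!k \<inter> \<Union>(set (take k es))). mg (es!k) w J0 = mg (es!j) w J0))) \<Longrightarrow>
     \<exists>P. (\<forall>K\<in>Jfam (\<Union>(set es)). P K \<ge> 0) \<and> mg (\<Union>(set es)) P {} = 1 \<and>
         (\<forall>e\<in>set es. \<forall>J\<in>Jfam e. mg (\<Union>(set es)) P J = w J)"
proof (induction es rule: rev_induct)
  case Nil
  show ?case
    by (rule exI[of _ "\<lambda>_. 1"]) (simp add: mg_def Jfam_empty)
next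
  case (snoc x es)
  let ?A = "\<Union>(set es)"
  have rip': "\<forall>k<length es. es!k \<inter> \<Union>(set (take k es)) = {} \<or>
        (\<exists>j<k. es!k \<inter> \<Union>(set (take k es)) \<subseteq> es!j \<and>
           (\<forall>J0\<in>Jfam (es!k \<inter> \<Union>(set (take k es))). mg (es!k) w J0 = mg (es!j) w J0))"
  proof (intro allI impI)
    fix k assume k: "k < length es"
    have e1: "(es@[x])!k = es!k" using k by (simp add: nth_append)
    have e2: "take k (es@[x]) = take k es" using k by simp
    have "k < length (es@[x])" using k by simp
    from snoc.prems(4)[rule_format, OF this, unfolded e1 e2]
    show "es!k \<inter> \<Union>(set (take k es)) = {} \<or>
        (\<exists>j<k. es!k \<inter> \<Union>(set (take k es)) \<subseteq> es!j \<and>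
           (\<forall>J0\<in>Jfam (es!k \<inter> \<Union>(set (take k es))). mg (es!k) w J0 = mg (es!j) w J0))"
    proof
      assume "es!k \<inter> \<Union>(set (take k es)) = {}" then show ?thesis by simp
    next
      assume "\<exists>j<k. es!k \<inter> \<Union>(set (take k es)) \<subseteq> (es@[x])!j \<and>
           (\<forall>J0\<in>Jfam (es!k \<inter> \<Union>(set (take k es))). mg (es!k) w J0 = mg ((es@[x])!j) w J0)"
      then obtain j where j: "j<k" "es!k \<inter> \<Union>(set (take k es)) \<subseteq> (es@[x])!j"
          "\<forall>J0\<in>Jfam (es!k \<inter> \<Union>(set (take k es))). mg (es!k) w J0 = mg ((es@[x])!j) w J0" by (elim exE conjE) (rule that; assumption)
      moreover have "(es@[x])!j = es!j" using j(1) k by (simp add: nth_append)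
      ultimately show ?thesis by auto
    qed
  qed
  obtain P' where P': "\<forall>K\<in>Jfam ?A. P' K \<ge> 0" "mg ?A P' {} = 1"
      "\<forall>e\<in>set es. \<forall>J\<in>Jfam e. mg ?A P' J = w J"
    using snoc.IH snoc.prems(1-3) rip' by auto
  have AV: "?A \<subseteq> V" and xV: "x \<subseteq> V" using snoc.prems(1) by auto
  have fA: "finite ?A" "\<forall>I\<in>?A. finite I" using fV AV finite_subset by auto
  have xnn: "\<forall>J\<in>Jfam x. w J \<ge> 0" using snoc.prems(2) by auto
  have ripx: "x \<inter> ?A = {} \<or> (\<exists>j<length es. x \<inter> ?A \<subseteq> es!j \<and>
           (\<forall>J0\<in>Jfam (x \<inter> ?A). mg x w J0 = mg (es!j) w J0))"
  proof -
    have r0: "length es < length (es@[x])" by simp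
    have r: "(es@[x])!length es \<inter> \<Union>(set (take (length es) (es@[x]))) = {} \<or>
        (\<exists>j<length es. (es@[x])!length es \<inter> \<Union>(set (take (length es) (es@[x]))) \<subseteq> (es@[x])!j \<and>
           (\<forall>J0\<in>Jfam ((es@[x])!length es \<inter> \<Union>(set (take (length es) (es@[x])))).
              mg ((es@[x])!length es) w J0 = mg ((es@[x])!j) w J0))"
      by (rule snoc.prems(4)[rule_format]) simp
    have e1: "(es@[x])!length es = x" by simp
    have e2: "take (length es) (es@[x]) = es" by simp
    from r[unfolded e1 e2] show ?thesis
    proof
      assume "x \<inter> ?A = {}" then show ?thesis by simp
    next
      assume "\<exists>j<length es. x \<inter> ?A \<subseteq> (es@[x])!j \<and>
           (\<forall>J0\<in>Jfam (x \<inter> ?A). mg x w J0 = mg ((es@[x])!j) w J0)"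
      then obtain j where j: "j<length es" "x \<inter> ?A \<subseteq> (es@[x])!j"
          "\<forall>J0\<in>Jfam (x \<inter> ?A). mg x w J0 = mg ((es@[x])!j) w J0" by (elim exE conjE) (rule that; assumption)
      moreover have "(es@[x])!j = es!j" using j(1) by (simp add: nth_append)
      ultimately show ?thesis by auto
    qed
  qed
  have cons: "\<forall>J0\<in>Jfam (?A \<inter> x). mg ?A P' J0 = mg x w J0"
  proof
    fix J0 assume J0: "J0 \<in> Jfam (?A \<inter> x)"
    from ripx show "mg ?A P' J0 = mg x w J0"
    proof
      assume e: "x \<inter> ?A = {}"
      then have "J0 = {}" using J0 by (simp add: Int_commute Jfam_empty)
      moreover have "mg x w {} = 1" using snoc.prems(3) by (simp add: mg_def)
      ultimately show ?thesis using P'(2) by simp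
    next
      assume "\<exists>j<length es. x \<inter> ?A \<subseteq> es!j \<and>
           (\<forall>J0\<in>Jfam (x \<inter> ?A). mg x w J0 = mg (es!j) w J0)"
      then obtain j where j: "j < length es" "x \<inter> ?A \<subseteq> es!j"
        "\<forall>J0\<in>Jfam (x \<inter> ?A). mg x w J0 = mg (es!j) w J0" by (elim exE conjE) (rule that; assumption)
      have ej: "es!j \<in> set es" using j(1) by simp
      then have ejA: "es!j \<subseteq> ?A" by auto
      have J0': "J0 \<in> Jfam (x \<inter> ?A)" using J0 by (simp add: Int_commute)
      have "mg ?A P' J0 = sum (mg ?A P') {J\<in>Jfam (es!j). J0 \<subseteq> J}"
        using mg_trans[OF fA j(2) ejA J0'] .
      also have "\<dots> = sum w {J\<in>Jfam (es!j). J0 \<subseteq> J}"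
        by (rule sum.cong) (use P'(3) ej in auto)
      also have "\<dots> = mg x w J0" using j(3) J0' by (simp add: mg_def)
      finally show ?thesis .
    qed
  qed
  define P where "P = (\<lambda>K. P' (K \<inter> \<Union>?A) * w (K \<inter> \<Union>x) / mg x w (K \<inter> \<Union>(?A\<inter>x)))"
  note gl = glue[OF pd fV AV xV P'(1) xnn cons P_def]
  have U: "\<Union>(set (es@[x])) = ?A \<union> x" by auto
  show ?case
  proof (rule exI[of _ P], unfold U, intro conjI ballI)
    show "\<And>K. K \<in> Jfam (?A \<union> x) \<Longrightarrow> 0 \<le> P K" using gl(1) by auto
    show "mg (?A \<union> x) P {} = 1" using gl(2)[of "{}" "{}"] P'(2) by (simp add: Jfam_empty)
    fix e J assume e: "e \<in> set (es@[x])" and J: "J \<in> Jfam e"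
    show "mg (?A \<union> x) P J = w J"
    proof (cases "e \<in> set es")
      case True
      then have "e \<subseteq> ?A" by auto
      then show ?thesis using gl(2)[OF _ J] P'(3) True J by auto
    next
      case False
      then have "e = x" using e by auto
      then show ?thesis using gl(3) J by auto
    qed
  qed
qed

fun wk :: "'a set set \<Rightarrow> 'a list \<Rightarrow> bool" where
  "wk T [] = False"
| "wk T [x] = True"
| "wk T (x # y # xs) = ({x, y} \<in> T \<and> wk T (y # xs))"

lemma is_walk_Cons2: "is_walk T (x # y # xs) \<longleftrightarrow> {x, y} \<in> T \<and> is_walk T (y # xs)"
proof
  assume a: "is_walk T (x # y # xs)"
  have "Suc 0 < length (x # y # xs)" by simp
  then have "{(x # y # xs) ! 0, (x # y # xs) ! Suc 0} \<in> T" using a unfolding is_walk_def by blast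
  then have "{x, y} \<in> T" by simp
  moreover have "is_walk T (y # xs)" unfolding is_walk_def
  proof (intro conjI allI impI)
    fix k assume "Suc k < length (y # xs)"
    then have "Suc (Suc k) < length (x # y # xs)" by simp
    then have "{(x # y # xs) ! Suc k, (x # y # xs) ! Suc (Suc k)} \<in> T" using a unfolding is_walk_def by blast
    then show "{(y # xs) ! k, (y # xs) ! Suc k} \<in> T" by simp
  qed simp
  ultimately show "{x, y} \<in> T \<and> is_walk T (y # xs)" by simp
next
  assume a: "{x, y} \<in> T \<and> is_walk T (y # xs)"
  show "is_walk T (x # y # xs)" unfolding is_walk_def
  proof (intro conjI allI impI)
    fix k assume k: "Suc k < length (x # y # xs)"
    show "{(x # y # xs) ! k, (x # y # xs) ! Suc k} \<in> T"
    proof (cases k)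
      case 0 then show ?thesis using a by simp
    next
      case (Suc k')
      then have "Suc k' < length (y # xs)" using k by simp
      then have "{(y # xs) ! k', (y # xs) ! Suc k'} \<in> T" using a unfolding is_walk_def by blast
      then show ?thesis using Suc by simp
    qed
  qed simp
qed

lemma wk_iff: "is_walk T p \<longleftrightarrow> wk T p"
proof (induction T p rule: wk.induct)
  case (1 T) then show ?case by (simp add: is_walk_def)
next
  case (2 T x) then show ?case by (simp add: is_walk_def)
next
  case (3 T x y xs) then show ?case by (simp add: is_walk_Cons2)
qed

lemma wk_append: "wk T (xs @ y # ys) \<longleftrightarrow> wk T (xs @ [y]) \<and> wk T (y # ys)"
proof (induction xs)
  case Nil then show ?case by simp
next
  case (Cons a xs) then show ?case by (cases xs) auto
qed

lemma wk_mono: "wk T p \<Longrightarrow> T \<subseteq> T' \<Longrightarrow> wk T' p"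
  by (induction T p rule: wk.induct) auto

lemma wk_restrict: "wk T p \<Longrightarrow> l \<notin> set p \<Longrightarrow> wk {t\<in>T. l \<notin> t} p"
  by (induction T p rule: wk.induct) auto

lemma wk_snoc: "wk T p \<Longrightarrow> {last p, y} \<in> T \<Longrightarrow> wk T (p @ [y])"
  by (induction T p rule: wk.induct) auto

lemma wk_drop: "wk T p \<Longrightarrow> i < length p \<Longrightarrow> wk T (drop i p)"
proof -
  assume a: "wk T p" "i < length p"
  have "p = take i p @ p ! i # drop (Suc i) p" using a(2) by (rule id_take_nth_drop)
  then have "wk T p = wk T (take i p @ p ! i # drop (Suc i) p)" by (rule arg_cong)
  then have "wk T (take i p @ p ! i # drop (Suc i) p)" using a(1) by blast
  then have "wk T (p ! i # drop (Suc i) p)" using wk_append[of T "take i p" "p ! i" "drop (Suc i) p"] by blast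
  then show ?thesis using a(2) by (simp add: Cons_nth_drop_Suc)
qed

lemma tree_edge: "is_tree N T \<Longrightarrow> {a, b} \<in> T \<Longrightarrow> a \<in> N \<and> b \<in> N \<and> a \<noteq> b"
proof -
  assume tr: "is_tree N T" and ab: "{a, b} \<in> T"
  then obtain a' b' where "a' \<in> N" "b' \<in> N" "a' \<noteq> b'" "{a, b} = {a', b'}"
    unfolding is_tree_def by blast
  then show ?thesis by (auto simp: doubleton_eq_iff)
qed

lemma wk_setN: "is_tree N T \<Longrightarrow> wk T p \<Longrightarrow> 2 \<le> length p \<Longrightarrow> set p \<subseteq> N"
proof (induction T p rule: wk.induct)
  case (3 T x y xs)
  then show ?case by (cases xs) (auto dest: tree_edge)
qed auto

lemma walk_to_path: "wk T p \<Longrightarrow> \<exists>q. wk T q \<and> distinct q \<and> hd q = hd p \<and> last q = last p \<and> set q \<subseteq> set p"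
proof (induction "length p" arbitrary: p rule: less_induct)
  case less
  show ?case
  proof (cases "distinct p")
    case True then show ?thesis using less.prems by blast
  next
    case False
    then obtain xs ys zs y where p: "p = xs @ [y] @ ys @ [y] @ zs" using not_distinct_decomp by blast
    have "wk T (xs @ y # (ys @ y # zs))" using less.prems p by simp
    then have "wk T (xs @ [y])" "wk T (y # ys @ y # zs)" using wk_append[of T xs y "ys @ y # zs"] by blast+
    moreover have "wk T ((y # ys) @ y # zs)" using calculation(2) by simp
    then have "wk T (y # zs)" using wk_append[of T "y # ys" y zs] by blast
    ultimately have w: "wk T (xs @ y # zs)" using wk_append[of T xs y zs] by blast
    have "length (xs @ y # zs) < length p" using p by simp
    then obtain q where q: "wk T q" "distinct q" "hd q = hd (xs @ y # zs)" "last q = last (xs @ y # zs)"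
      "set q \<subseteq> set (xs @ y # zs)" using less.hyps w by blast
    have "hd (xs @ y # zs) = hd p" using p by (cases xs) auto
    moreover have "last (xs @ y # zs) = last p" using p by (cases zs rule: rev_cases) auto
    moreover have "set (xs @ y # zs) \<subseteq> set p" using p by auto
    ultimately show ?thesis using q by auto
  qed
qed

lemma two_last: "2 \<le> length p \<Longrightarrow> \<exists>xs u v. p = xs @ [u, v]"
proof -
  assume "2 \<le> length p"
  then obtain v u ys where "rev p = v # u # ys" by (cases "rev p"; cases "tl (rev p)") auto
  then have "rev (rev p) = rev ys @ [u, v]" by simp
  then have "p = rev ys @ [u, v]" by simp
  then show ?thesis by blast
qed

lemma tree_leaf:
  assumes tr: "is_tree N T" and ne: "T \<noteq> {}"
  shows "\<exists>l u. l \<in> N \<and> u \<in> N \<and> l \<noteq> u \<and> {l, u} \<in> T \<and> (\<forall>y. {l, y} \<in> T \<longrightarrow> y = u)"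
proof -
  let ?P = "\<lambda>p. wk T p \<and> distinct p \<and> set p \<subseteq> N \<and> 2 \<le> length p"
  have fN: "finite N" using tr by (simp add: is_tree_def)
  obtain t where "t \<in> T" using ne by auto
  then obtain a b where ab: "a \<in> N" "b \<in> N" "a \<noteq> b" "t = {a, b}" using tr by (auto simp: is_tree_def)
  have P0: "?P [a, b]" using ab \<open>t \<in> T\<close> by auto
  have bnd: "\<forall>p. ?P p \<longrightarrow> length p < card N + 1"
  proof (intro allI impI)
    fix p assume "?P p"
    then have "card (set p) = length p" "card (set p) \<le> card N"
      using distinct_card card_mono fN by auto
    then show "length p < card N + 1" by simp
  qed
  obtain p where p: "?P p" and pmax: "\<forall>q. ?P q \<longrightarrow> length q \<le> length p"
    using ex_has_greatest_nat[of ?P "[a,b]" length "card N + 1", OF P0 bnd] by blast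
  obtain xs u v where pe: "p = xs @ [u, v]" using two_last p by blast
  have "wk T (xs @ u # [v])" using p pe by simp
  then have "wk T (u # [v])" using wk_append[of T xs u "[v]"] by blast
  then have uv: "{u, v} \<in> T" by simp
  have uvN: "u \<in> N" "v \<in> N" "u \<noteq> v" using tree_edge[OF tr uv] by auto
  have "\<forall>y. {v, y} \<in> T \<longrightarrow> y = u"
  proof (intro allI impI)
    fix y assume vy: "{v, y} \<in> T"
    have yN: "y \<in> N" and yv: "v \<noteq> y" using tree_edge[OF tr vy] by auto
    show "y = u"
    proof (rule ccontr)
      assume yu: "y \<noteq> u"
      show False
      proof (cases "y \<in> set p")
        case False
        have "last p = v" using pe by simp
        then have "wk T (p @ [y])" using p vy wk_snoc[of T p y] by simp
        moreover have "distinct (p @ [y])" using p False by simp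
        moreover have "set (p @ [y]) \<subseteq> N" using p yN by simp
        moreover have "2 \<le> length (p @ [y])" using p by simp
        ultimately have "length (p @ [y]) \<le> length p" using pmax by blast
        then show False by simp
      next
        case True
        then have "y \<in> set xs" using pe yu yv by auto
        from split_list[OF this] obtain as bs where xs: "xs = as @ y # bs" by blast
        let ?q = "y # bs @ [u, v]"
        have "wk T (as @ y # (bs @ [u, v]))" using p pe xs by simp
        then have "wk T ?q" using wk_append[of T as y "bs @ [u, v]"] by blast
        moreover have "distinct ?q" using p pe xs by simp
        moreover have "{last ?q, hd ?q} \<in> T" using vy by simp
        ultimately have "is_cycle T ?q" by (simp add: is_cycle_def is_path_def wk_iff)
        then show False using tr unfolding is_tree_def by blast
      qed
    qed
  qed
  moreover have "{v, u} \<in> T" using uv by (simp add: insert_commute)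
  ultimately show ?thesis using uvN by blast
qed

lemma tree_fin: "is_tree N T \<Longrightarrow> finite N"
  unfolding is_tree_def by (rule conjunct1)
lemma tree_edges: "is_tree N T \<Longrightarrow> \<forall>t\<in>T. \<exists>a b. a \<in> N \<and> b \<in> N \<and> a \<noteq> b \<and> t = {a, b}"
  unfolding is_tree_def by (rule conjunct1[OF conjunct2])
lemma tree_conn: "is_tree N T \<Longrightarrow> \<forall>a\<in>N. \<forall>b\<in>N. \<exists>p. is_walk T p \<and> hd p = a \<and> last p = b"
  unfolding is_tree_def by (rule conjunct1[OF conjunct2[OF conjunct2]])
lemma tree_nocyc: "is_tree N T \<Longrightarrow> \<nexists>p. is_cycle T p"
  unfolding is_tree_def by (rule conjunct2[OF conjunct2[OF conjunct2]])

lemma avoid_leaf: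
  assumes leaf: "\<forall>y. {l, y} \<in> T \<longrightarrow> y = u"
  shows "wk T p \<Longrightarrow> hd p \<noteq> l \<Longrightarrow> last p \<noteq> l \<Longrightarrow>
    \<exists>q. wk {t\<in>T. l \<notin> t} q \<and> hd q = hd p \<and> last q = last p"
proof (induction "length p" arbitrary: p rule: less_induct)
  case less
  show ?case
  proof (cases "l \<in> set p")
    case False
    then show ?thesis using wk_restrict[OF less.prems(1)] by blast
  next
    case True
    from split_list[OF this] obtain xs ys where p: "p = xs @ l # ys" by blast
    have xne: "xs \<noteq> []" using p less.prems(2) by auto
    have yne: "ys \<noteq> []" using p less.prems(3) by auto
    obtain xs' a where xs: "xs = xs' @ [a]" using xne by (cases xs rule: rev_cases) auto
    obtain b ys' where ys: "ys = b # ys'" using yne by (cases ys) auto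
    have w1: "wk T (xs @ [l])" and w2: "wk T (l # ys)"
      using less.prems(1) p wk_append[of T xs l ys] by blast+
    have "wk T (xs' @ a # [l])" using w1 xs by simp
    then have "wk T (xs' @ [a])" and "wk T (a # [l])" using wk_append[of T xs' a "[l]"] by blast+
    then have wa: "wk T (xs' @ [a])" and "{a, l} \<in> T" by simp_all
    then have "{l, a} \<in> T" by (simp add: insert_commute)
    then have au: "a = u" using leaf by blast
    have "{l, b} \<in> T" and wb: "wk T (b # ys')" using w2 ys by simp_all
    then have bu: "b = u" using leaf by blast
    have w: "wk T (xs' @ u # ys')" using wa wb au bu wk_append[of T xs' u ys'] by blast
    have h: "hd (xs' @ u # ys') = hd p" using p xs au by (cases xs') auto
    have la: "last (xs' @ u # ys') = last p" using p ys bu by simp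
    have "length (xs' @ u # ys') < length p" using p xs ys by simp
    then obtain q where q: "wk {t\<in>T. l \<notin> t} q" "hd q = hd (xs' @ u # ys')" "last q = last (xs' @ u # ys')"
      using less.hyps[OF _ w] less.prems(2,3) h la by auto
    show ?thesis using q h la by auto
  qed
qed

lemma tree_remove:
  assumes jt: "is_join_tree E T" and l: "l \<in> E" and lf: "\<forall>y. {l, y} \<in> T \<longrightarrow> y = u"
  shows "is_join_tree (E - {l}) {t\<in>T. l \<notin> t}"
proof -
  let ?T = "{t\<in>T. l \<notin> t}"
  have tr: "is_tree E T" using jt by (simp add: is_join_tree_def)
  have "finite E" using tree_fin[OF tr] .
  then have fin: "finite (E - {l})" by simp
  have edges: "\<forall>t\<in>?T. \<exists>a b. a \<in> E - {l} \<and> b \<in> E - {l} \<and> a \<noteq> b \<and> t = {a, b}"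
  proof (intro ballI)
    fix t assume t: "t \<in> ?T"
    then have tT: "t \<in> T" and lt: "l \<notin> t" by auto
    have "\<exists>a b. a \<in> E \<and> b \<in> E \<and> a \<noteq> b \<and> t = {a, b}" using tree_edges[OF tr] tT by (rule bspec)
    then obtain a b where ab: "a \<in> E \<and> b \<in> E \<and> a \<noteq> b \<and> t = {a, b}" by (elim exE) (rule that)
    then have "a \<in> E - {l} \<and> b \<in> E - {l} \<and> a \<noteq> b \<and> t = {a, b}" using lt by auto
    then show "\<exists>a b. a \<in> E - {l} \<and> b \<in> E - {l} \<and> a \<noteq> b \<and> t = {a, b}" by (intro exI)
  qed
  have conn: "\<forall>a\<in>E - {l}. \<forall>b\<in>E - {l}. \<exists>p. is_walk ?T p \<and> hd p = a \<and> last p = b"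
  proof (intro ballI)
    fix a b assume a: "a \<in> E - {l}" and b: "b \<in> E - {l}"
    obtain p where p: "is_walk T p" "hd p = a" "last p = b" using tree_conn[OF tr] a b by blast
    have "wk T p" using p(1) by (simp add: wk_iff)
    then obtain q where "wk ?T q" "hd q = hd p" "last q = last p"
      using avoid_leaf[OF lf, of p] p a b by auto
    then show "\<exists>p. is_walk ?T p \<and> hd p = a \<and> last p = b" using p by (auto simp: wk_iff)
  qed
  have nocyc: "\<nexists>p. is_cycle ?T p"
  proof
    assume "\<exists>p. is_cycle ?T p"
    then obtain p where p: "is_cycle ?T p" by blast
    then have "wk ?T p" by (simp add: is_cycle_def is_path_def wk_iff)
    then have "wk T p" by (rule wk_mono) auto
    then have "is_cycle T p" using p by (auto simp: is_cycle_def is_path_def wk_iff)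
    then show False using tree_nocyc[OF tr] by blast
  qed
  have join: "\<forall>p. is_path ?T p \<longrightarrow> hd p \<noteq> last p \<longrightarrow> (\<forall>e\<in>set p. hd p \<inter> last p \<subseteq> e)"
  proof (intro allI impI)
    fix p assume p: "is_path ?T p" "hd p \<noteq> last p"
    then have "wk ?T p" by (simp add: is_path_def wk_iff)
    then have "wk T p" by (rule wk_mono) auto
    then have "is_path T p" using p by (auto simp: is_path_def wk_iff)
    then show "\<forall>e\<in>set p. hd p \<inter> last p \<subseteq> e" using jt p(2) unfolding is_join_tree_def by blast
  qed
  have "is_tree (E - {l}) ?T" unfolding is_tree_def using fin edges conn nocyc by (intro conjI)
  then show ?thesis unfolding is_join_tree_def using join by (intro conjI)
qed

lemma leaf_rip:
  assumes jt: "is_join_tree E T" and l: "l \<in> E" and lf: "\<forall>y. {l, y} \<in> T \<longrightarrow> y = u"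
    and e: "e \<in> E" "e \<noteq> l"
  shows "l \<inter> e \<subseteq> u"
proof -
  have tr: "is_tree E T" using jt by (simp add: is_join_tree_def)
  obtain p where p: "is_walk T p" "hd p = l" "last p = e" using tree_conn[OF tr] l e by blast
  have "wk T p" using p(1) by (simp add: wk_iff)
  then obtain q where q: "wk T q" "distinct q" "hd q = l" "last q = e"
    using walk_to_path p by metis
  have "q \<noteq> []" using q(1) by auto
  then obtain q' where q': "q = l # q'" using q(3) by (cases q) auto
  have "q' \<noteq> []" using q' q(4) e(2) by auto
  then obtain y q'' where "q' = y # q''" by (cases q') auto
  then have "{l, y} \<in> T" using q(1) q' by simp
  then have "y = u" using lf by blast
  then have uq: "u \<in> set q" using q' \<open>q' = y # q''\<close> by simp
  have "is_path T q" using q by (simp add: is_path_def wk_iff)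
  then have "\<forall>e'\<in>set q. hd q \<inter> last q \<subseteq> e'" using jt q e(2) unfolding is_join_tree_def by auto
  then show ?thesis using uq q by auto
qed

lemma join_order:
  shows "is_join_tree E T \<Longrightarrow> E \<noteq> {} \<Longrightarrow> \<exists>es. set es = E \<and>
     (\<forall>k<length es. 0 < k \<longrightarrow> (\<exists>j<k. {es!k, es!j} \<in> T \<and> (\<forall>i<k. es!k \<inter> es!i \<subseteq> es!j)))"
proof (induction "card E" arbitrary: E T rule: less_induct)
  case less
  have tr: "is_tree E T" using less.prems(1) by (simp add: is_join_tree_def)
  have fE: "finite E" using tree_fin[OF tr] .
  show ?case
  proof (cases "T = {}")
    case True
    obtain e where e: "e \<in> E" using less.prems(2) by auto
    have "b = e" if b: "b \<in> E" for b
    proof (rule ccontr)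
      assume "b \<noteq> e"
      obtain p where p: "is_walk T p" "hd p = e" "last p = b" using tree_conn[OF tr] e b by blast
      have "p \<noteq> []" using p(1) by (simp add: is_walk_def)
      then obtain x p' where "p = x # p'" by (cases p) auto
      moreover have "p' \<noteq> []" using calculation p \<open>b \<noteq> e\<close> by auto
      ultimately have "Suc 0 < length p" by simp
      then have "{p!0, p!Suc 0} \<in> T" using p(1) unfolding is_walk_def by blast
      then show False using True by simp
    qed
    then have "\<forall>b\<in>E. b = e" by blast
    then have "E = {e}" using e by blast
    then show ?thesis by (intro exI[of _ "[e]"]) auto
  next
    case False
    obtain l u where lu: "l \<in> E" "u \<in> E" "l \<noteq> u" "{l, u} \<in> T" and lf: "\<forall>y. {l, y} \<in> T \<longrightarrow> y = u"
      using tree_leaf[OF tr False] by blast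
    let ?E = "E - {l}" and ?T = "{t\<in>T. l \<notin> t}"
    have jt': "is_join_tree ?E ?T" using tree_remove[OF less.prems(1) lu(1) lf] .
    have c: "card ?E < card E" by (rule card_Diff1_less[OF fE lu(1)])
    have ne: "?E \<noteq> {}" using lu by auto
    have "\<exists>es. set es = ?E \<and>
      (\<forall>k<length es. 0 < k \<longrightarrow> (\<exists>j<k. {es!k, es!j} \<in> ?T \<and> (\<forall>i<k. es!k \<inter> es!i \<subseteq> es!j)))"
      using less.hyps[OF c jt' ne] .
    then obtain es where es: "set es = ?E"
      "\<forall>k<length es. 0 < k \<longrightarrow> (\<exists>j<k. {es!k, es!j} \<in> ?T \<and> (\<forall>i<k. es!k \<inter> es!i \<subseteq> es!j))"
      by (elim exE conjE) (rule that; assumption)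
    have "u \<in> set es" using es(1) lu by auto
    then obtain ju where ju: "ju < length es" "es!ju = u" by (auto simp: in_set_conv_nth)
    let ?es = "es @ [l]"
    have "set ?es = E" using es(1) lu(1) by auto
    moreover have "\<forall>k<length ?es. 0 < k \<longrightarrow> (\<exists>j<k. {?es!k, ?es!j} \<in> T \<and> (\<forall>i<k. ?es!k \<inter> ?es!i \<subseteq> ?es!j))"
    proof (intro allI impI)
      fix k assume k: "k < length ?es" "0 < k"
      show "\<exists>j<k. {?es!k, ?es!j} \<in> T \<and> (\<forall>i<k. ?es!k \<inter> ?es!i \<subseteq> ?es!j)"
      proof (cases "k < length es")
        case True
        have ek: "?es!k = es!k" using True by (simp add: nth_append)
        from es(2)[rule_format, OF True k(2)] obtain j where j: "j<k" "{es!k, es!j} \<in> ?T"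
            "\<forall>i<k. es!k \<inter> es!i \<subseteq> es!j"
          by (elim exE conjE) (rule that; assumption)
        have ej: "?es!j = es!j" using j(1) True by (simp add: nth_append)
        have "{?es!k, ?es!j} \<in> T" using j(2) unfolding ek ej by simp
        moreover have "\<forall>i<k. ?es!k \<inter> ?es!i \<subseteq> ?es!j"
        proof (intro allI impI)
          fix i assume i: "i<k"
          then have "?es!i = es!i" using True by (simp add: nth_append)
          then show "?es!k \<inter> ?es!i \<subseteq> ?es!j" using j(3) i unfolding ek ej by simp
        qed
        ultimately show ?thesis using j(1) by blast
      next
        case False
        then have kl: "k = length es" using k by simp
        have ek: "?es!k = l" using kl by simp
        have eju: "?es!ju = u" using ju by (simp add: nth_append)
        have "\<forall>i<k. ?es!k \<inter> ?es!i \<subseteq> ?es!ju"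
        proof (intro allI impI)
          fix i assume i: "i < k"
          then have ei: "?es!i = es!i" using kl by (simp add: nth_append)
          have "es!i \<in> set es" using i kl by simp
          then have "es!i \<in> ?E" by (simp only: es(1))
          then have "es!i \<in> E" "es!i \<noteq> l" by simp_all
          then have "l \<inter> es!i \<subseteq> u" by (rule leaf_rip[OF less.prems(1) lu(1) lf])
          then show "?es!k \<inter> ?es!i \<subseteq> ?es!ju" unfolding ek ei eju .
        qed
        moreover have "{?es!k, ?es!ju} \<in> T" unfolding ek eju using lu(4) .
        ultimately show ?thesis using ju kl by blast
      qed
    qed
    ultimately show ?thesis by blast
  qed
qed

definition sK :: "nat set set \<Rightarrow> nat set set set \<Rightarrow> nat set \<Rightarrow> nat set \<Rightarrow> real" where
  "sK V E K = (\<lambda>J. if J \<in> JH V E \<and> J \<subseteq> K then 1 else 0)"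

lemma sum_indic: "finite A \<Longrightarrow> (\<Sum>x\<in>A. if P x then 1 else (0::real)) = real (card {x\<in>A. P x})"
proof -
  assume "finite A"
  then have "(\<Sum>x\<in>A. if P x then 1 else (0::real)) = sum (\<lambda>_. 1::real) {x\<in>A. P x}"
    using sum.inter_filter[of A "\<lambda>_. 1::real" P] by simp
  then show ?thesis by simp
qed

lemma prod_indic: "finite A \<Longrightarrow> (\<Prod>x\<in>A. if P x then 1 else (0::real)) = (if \<forall>x\<in>A. P x then 1 else 0)"
proof -
  assume f: "finite A"
  show ?thesis
  proof (cases "\<forall>x\<in>A. P x")
    case True
    then have "(\<Prod>x\<in>A. if P x then 1 else (0::real)) = (\<Prod>x\<in>A. 1)" by (intro prod.cong) auto
    then show ?thesis using True by simp
  next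
    case False
    then obtain a where "a \<in> A" "\<not> P a" by blast
    then have "(\<Prod>x\<in>A. if P x then 1 else (0::real)) = 0" using f by (subst prod_zero_iff) auto
    then show ?thesis using False by simp
  qed
qed

lemma swap_lin:
  "(\<Sum>J\<in>B. \<Sum>s\<in>F. c s * s J) = (\<Sum>s\<in>F. c s * (\<Sum>J\<in>B. (s J :: real)))"
  by (subst sum.swap) (simp add: sum_distrib_left)

context
  fixes V :: "nat set set" and E :: "nat set set set"
  assumes pd: "pdisj V" and fV: "finite V" and fI: "\<forall>I\<in>V. finite I" and neI: "\<forall>I\<in>V. I \<noteq> {}"
    and hE: "\<forall>e\<in>E. e \<subseteq> V \<and> 2 \<le> card e"
begin

lemma Jfam_JH: "e \<in> E \<or> (\<exists>I\<in>V. e = {I}) \<Longrightarrow> Jfam e \<subseteq> JH V E"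
  unfolding JH_def Lset_def by blast

lemma JH_cases: "J \<in> JH V E \<Longrightarrow> \<exists>e. (e \<in> E \<or> (\<exists>I\<in>V. e = {I})) \<and> J \<in> Jfam e"
  unfolding JH_def Lset_def by blast

lemma single_JH: "I \<in> V \<Longrightarrow> i \<in> I \<Longrightarrow> {i} \<in> JH V E"
proof -
  assume "I \<in> V" "i \<in> I"
  then have "{i} \<in> Jfam {I}" by (simp add: Jfam_single)
  then show ?thesis using Jfam_JH[of "{I}"] \<open>I \<in> V\<close> by blast
qed

lemma edge_sub: "e \<in> E \<or> (\<exists>I\<in>V. e = {I}) \<Longrightarrow> e \<subseteq> V \<and> e \<noteq> {}"
  using hE by fastforce

lemma JH_props: "J \<in> JH V E \<Longrightarrow> J \<subseteq> \<Union>V \<and> finite J \<and> J \<noteq> {}"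
proof -
  assume "J \<in> JH V E"
  from JH_cases[OF this] obtain e where e: "e \<in> E \<or> (\<exists>I\<in>V. e = {I})" "J \<in> Jfam e" by blast
  have ev: "e \<subseteq> V" "e \<noteq> {}" using edge_sub[OF e(1)] by auto
  have "J \<subseteq> \<Union>e" using e(2) by (simp add: Jfam_def)
  then have sub: "J \<subseteq> \<Union>V" using ev by blast
  have "finite (\<Union>V)" using fV fI by blast
  then have "finite J" using finite_subset[OF sub] by blast
  moreover obtain I where "I \<in> e" using ev by blast
  then have "card (J \<inter> I) = 1" using e(2) by (simp add: Jfam_def)
  then have "J \<noteq> {}" by auto
  ultimately show ?thesis using sub by blast
qed

lemma single_in: "i \<in> \<Union>V \<Longrightarrow> {i} \<in> JH V E"
  using single_JH by blast

lemma indic_marg: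
  assumes K: "K \<in> Jfam V" and e: "e \<subseteq> V" and J0: "J0 \<subseteq> \<Union>e"
  shows "(\<Sum>J\<in>{J\<in>Jfam e. J0 \<subseteq> J}. if J \<subseteq> K then 1 else (0::real)) = (if J0 \<subseteq> K then 1 else 0)"
proof -
  have "finite e" using finite_subset[OF e fV] .
  then have fe: "finite (Jfam e)" using Jfam_finite[of e] fI e by blast
  have Ke: "K \<inter> \<Union>e \<in> Jfam e" using Jfam_restrict[OF K e] .
  have iff: "J \<subseteq> K \<longleftrightarrow> J = K \<inter> \<Union>e" if "J \<in> Jfam e" for J
    using Jfam_sub_iff[OF K that e] by auto
  have J0K: "J0 \<subseteq> K \<inter> \<Union>e \<longleftrightarrow> J0 \<subseteq> K" using J0 by auto
  have "{J\<in>{J\<in>Jfam e. J0 \<subseteq> J}. J \<subseteq> K} = (if J0 \<subseteq> K then {K \<inter> \<Union>e} else {})"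
    using iff Ke J0K by auto
  moreover have "finite {J\<in>Jfam e. J0 \<subseteq> J}" using fe by simp
  ultimately show ?thesis using sum_indic[of "{J\<in>Jfam e. J0 \<subseteq> J}" "\<lambda>J. J \<subseteq> K"] by simp
qed

lemma sK_wsum:
  assumes K: "K \<in> Jfam V" and I: "I \<in> V"
  shows "wsum (sK V E K) I = 1"
proof -
  have fIn: "finite I" using fI I by blast
  have "wsum (sK V E K) I = (\<Sum>i\<in>I. if i \<in> K then 1 else (0::real))"
    unfolding wsum_def
  proof (rule sum.cong[OF refl])
    fix i assume "i \<in> I"
    then have "{i} \<in> JH V E" using single_JH[OF I] by blast
    then show "sK V E K {i} = (if i \<in> K then 1 else 0)" by (simp add: sK_def)
  qed
  also have "\<dots> = real (card {i\<in>I. i \<in> K})" by (rule sum_indic[OF fIn])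
  also have "{i\<in>I. i \<in> K} = K \<inter> I" by auto
  also have "card (K \<inter> I) = 1" using K I by (simp add: Jfam_def)
  finally show ?thesis by simp
qed

lemma sK_in_SH: "K \<in> Jfam V \<Longrightarrow> sK V E K \<in> SH V E"
proof -
  assume K: "K \<in> Jfam V"
  have prod: "sK V E K J = (\<Prod>i\<in>J. sK V E K {i})" if J: "J \<in> JH V E" for J
  proof -
    have Jp: "J \<subseteq> \<Union>V" "finite J" using JH_props[OF J] by auto
    have "(\<Prod>i\<in>J. sK V E K {i}) = (\<Prod>i\<in>J. if i \<in> K then 1 else 0)"
      by (rule prod.cong) (use Jp single_in in \<open>auto simp: sK_def\<close>)
    also have "\<dots> = (if \<forall>i\<in>J. i \<in> K then 1 else 0)" by (rule prod_indic[OF Jp(2)])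
    finally show ?thesis using J by (auto simp: sK_def)
  qed
  have c1: "\<forall>J. J \<notin> JH V E \<longrightarrow> sK V E K J = 0" by (simp add: sK_def)
  have c2: "\<forall>J\<in>JH V E. sK V E K J \<in> {0, 1}" by (simp add: sK_def)
  have c3: "\<forall>I\<in>V. wsum (sK V E K) I = 1" using sK_wsum[OF K] by blast
  have c4: "\<forall>J\<in>JH V E. card J > 1 \<longrightarrow> sK V E K J = (\<Prod>i\<in>J. sK V E K {i})" using prod by blast
  show ?thesis unfolding SH_def using c1 c2 c3 c4 by (intro CollectI conjI)
qed

lemma SH_sK: "w \<in> SH V E \<Longrightarrow> \<exists>K\<in>Jfam V. w = sK V E K"
proof -
  assume w: "w \<in> SH V E"
  have w0: "\<And>J. J \<notin> JH V E \<Longrightarrow> w J = 0" and w01: "\<And>J. J \<in> JH V E \<Longrightarrow> w J \<in> {0, 1}"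
    and ws: "\<And>I. I \<in> V \<Longrightarrow> wsum w I = 1"
    and wp: "\<And>J. J \<in> JH V E \<Longrightarrow> card J > 1 \<Longrightarrow> w J = (\<Prod>i\<in>J. w {i})"
    using w unfolding SH_def by auto
  define K where "K = {i\<in>\<Union>V. w {i} = 1}"
  have wi: "w {i} = (if i \<in> K then 1 else 0)" if "i \<in> \<Union>V" for i
    using w01[OF single_in[OF that]] that by (auto simp: K_def)
  have KJ: "K \<in> Jfam V" unfolding Jfam_def
  proof (intro CollectI conjI ballI)
    show "K \<subseteq> \<Union>V" by (auto simp: K_def)
    fix I assume I: "I \<in> V"
    have "1 = wsum w I" using ws[OF I] by simp
    also have "\<dots> = (\<Sum>i\<in>I. if i \<in> K then 1 else (0::real))"
      unfolding wsum_def
    proof (rule sum.cong[OF refl])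
      fix i assume "i \<in> I"
      then have "i \<in> \<Union>V" using I by blast
      then show "w {i} = (if i \<in> K then 1 else 0)" by (rule wi)
    qed
    also have "\<dots> = real (card {i\<in>I. i \<in> K})" using fI I sum_indic[of I "\<lambda>i. i \<in> K"] by simp
    also have "{i\<in>I. i \<in> K} = K \<inter> I" by auto
    finally show "card (K \<inter> I) = 1" by simp
  qed
  have "w = sK V E K"
  proof
    fix J
    show "w J = sK V E K J"
    proof (cases "J \<in> JH V E")
      case False then show ?thesis using w0 by (simp add: sK_def)
    next
      case True
      have Jp: "J \<subseteq> \<Union>V" "finite J" "J \<noteq> {}" using JH_props[OF True] by auto
      show ?thesis
      proof (cases "card J > 1")
        case True': True
        have "w J = (\<Prod>i\<in>J. w {i})" using wp[OF True True'] .
        also have "\<dots> = (\<Prod>i\<in>J. if i \<in> K then 1 else 0)"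
        proof (rule prod.cong[OF refl])
          fix i assume "i \<in> J"
          then have "i \<in> \<Union>V" using Jp by blast
          then show "w {i} = (if i \<in> K then 1 else 0)" by (rule wi)
        qed
        also have "\<dots> = (if \<forall>i\<in>J. i \<in> K then 1 else 0)" by (rule prod_indic[OF Jp(2)])
        finally show ?thesis using True by (auto simp: sK_def)
      next
        case False
        moreover have "card J > 0" using Jp(2,3) by (simp add: card_gt_0_iff)
        ultimately have "card J = 1" by linarith
        then obtain i where Ji: "J = {i}" by (rule card_1_singletonE)
        then have "i \<in> \<Union>V" using Jp by auto
        then show ?thesis using wi True Ji by (auto simp: sK_def)
      qed
    qed
  qed
  then show ?thesis using KJ by blast
qed

end

lemma swap_lin2:
  "(\<Sum>J\<in>B. \<Sum>s\<in>F. c s * g s J) = (\<Sum>s\<in>F. c s * (\<Sum>J\<in>B. (g s J :: real)))"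
  by (subst sum.swap) (simp add: sum_distrib_left)

lemma lin_diff:
  "(\<Sum>s\<in>F. c s * a s) - (\<Sum>s\<in>F. c s * b s) = (\<Sum>s\<in>F. c s * (a s - (b s :: real)))"
  by (simp add: sum_subtractf right_diff_distrib)

lemma MCdescD:
  assumes "w \<in> MCdesc V E T"
  shows "\<forall>J. J \<notin> JH V E \<longrightarrow> w J = 0" "\<forall>J\<in>JH V E. w J \<ge> 0" "\<forall>I\<in>V. wsum w I = 1" "\<forall>e\<in>E. \<forall>I\<in>e. \<forall>i\<in>I. w {i} - (\<Sum>J\<in>{J\<in>Jfam e. i \<in> J}. w J) = 0" "\<forall>e e'. {e, e'} \<in> T \<longrightarrow> card (e \<inter> e') > 1 \<longrightarrow>
        (\<forall>J0\<in>Jfam (e \<inter> e').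
           (\<Sum>J\<in>{J\<in>Jfam e. J0 \<subseteq> J}. w J) - (\<Sum>J\<in>{J\<in>Jfam e'. J0 \<subseteq> J}. w J) = 0)"
proof -
  have c: "(\<forall>J. J \<notin> JH V E \<longrightarrow> w J = 0) \<and> (\<forall>J\<in>JH V E. w J \<ge> 0) \<and> (\<forall>I\<in>V. wsum w I = 1) \<and> (\<forall>e\<in>E. \<forall>I\<in>e. \<forall>i\<in>I. w {i} - (\<Sum>J\<in>{J\<in>Jfam e. i \<in> J}. w J) = 0) \<and> (\<forall>e e'. {e, e'} \<in> T \<longrightarrow> card (e \<inter> e') > 1 \<longrightarrow>
        (\<forall>J0\<in>Jfam (e \<inter> e').
           (\<Sum>J\<in>{J\<in>Jfam e. J0 \<subseteq> J}. w J) - (\<Sum>J\<in>{J\<in>Jfam e'. J0 \<subseteq> J}. w J) = 0))"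
    using assms unfolding MCdesc_def mem_Collect_eq by assumption
  show "\<forall>J. J \<notin> JH V E \<longrightarrow> w J = 0" by (fact conjunct1[OF c])
  show "\<forall>J\<in>JH V E. w J \<ge> 0" by (fact conjunct1[OF conjunct2[OF c]])
  show "\<forall>I\<in>V. wsum w I = 1" by (fact conjunct1[OF conjunct2[OF conjunct2[OF c]]])
  show "\<forall>e\<in>E. \<forall>I\<in>e. \<forall>i\<in>I. w {i} - (\<Sum>J\<in>{J\<in>Jfam e. i \<in> J}. w J) = 0" by (fact conjunct1[OF conjunct2[OF conjunct2[OF conjunct2[OF c]]]])
  show "\<forall>e e'. {e, e'} \<in> T \<longrightarrow> card (e \<inter> e') > 1 \<longrightarrow>
        (\<forall>J0\<in>Jfam (e \<inter> e').
           (\<Sum>J\<in>{J\<in>Jfam e. J0 \<subseteq> J}. w J) - (\<Sum>J\<in>{J\<in>Jfam e'. J0 \<subseteq> J}. w J) = 0)" by (fact conjunct2[OF conjunct2[OF conjunct2[OF conjunct2[OF c]]]])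
qed

lemma MCdesc_convex:
  assumes FM: "F \<subseteq> MCdesc V E T" and c1: "sum c F = 1"
    and w: "w = (\<lambda>x. \<Sum>s\<in>F. c s * s x)" and cnn: "\<forall>s\<in>F. c s \<ge> 0"
  shows "w \<in> MCdesc V E T"
proof -
  have mem: "\<And>s. s \<in> F \<Longrightarrow> s \<in> MCdesc V E T" using FM by blast
  have m1: "\<And>s J. s \<in> F \<Longrightarrow> J \<notin> JH V E \<Longrightarrow> s J = 0"
    using MCdescD(1)[OF mem] by blast
  have m2: "\<And>s J. s \<in> F \<Longrightarrow> J \<in> JH V E \<Longrightarrow> s J \<ge> 0"
    using MCdescD(2)[OF mem] by blast
  have m3: "\<And>s I. s \<in> F \<Longrightarrow> I \<in> V \<Longrightarrow> wsum s I = 1"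
    using MCdescD(3)[OF mem] by blast
  have m4: "\<And>s e I i. s \<in> F \<Longrightarrow> e \<in> E \<Longrightarrow> I \<in> e \<Longrightarrow> i \<in> I \<Longrightarrow>
        s {i} - (\<Sum>J\<in>{J\<in>Jfam e. i \<in> J}. s J) = 0"
    using MCdescD(4)[OF mem] by blast
  have m5: "\<And>s e e' J0. s \<in> F \<Longrightarrow> {e, e'} \<in> T \<Longrightarrow> card (e \<inter> e') > 1 \<Longrightarrow> J0 \<in> Jfam (e \<inter> e') \<Longrightarrow>
        (\<Sum>J\<in>{J\<in>Jfam e. J0 \<subseteq> J}. s J) - (\<Sum>J\<in>{J\<in>Jfam e'. J0 \<subseteq> J}. s J) = 0"
    using MCdescD(5)[OF mem] by blast
  have a1: "\<forall>J. J \<notin> JH V E \<longrightarrow> w J = 0"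
  proof (intro allI impI)
    fix J assume J: "J \<notin> JH V E"
    have "\<forall>s\<in>F. c s * s J = 0" using m1[OF _ J] by simp
    then show "w J = 0" unfolding w by (rule sum.neutral)
  qed
  have a2: "\<forall>J\<in>JH V E. w J \<ge> 0" using m2 cnn by (auto simp: w intro!: sum_nonneg)
  have a3: "\<forall>I\<in>V. wsum w I = 1"
  proof
    fix I assume I: "I \<in> V"
    have "wsum w I = (\<Sum>i\<in>I. \<Sum>s\<in>F. c s * s {i})" by (simp add: wsum_def w)
    also have "\<dots> = (\<Sum>s\<in>F. c s * wsum s I)" unfolding wsum_def by (rule swap_lin2)
    also have "\<dots> = (\<Sum>s\<in>F. c s)" using m3 I by simp
    finally show "wsum w I = 1" using c1 by simp
  qed
  have a4: "\<forall>e\<in>E. \<forall>I\<in>e. \<forall>i\<in>I. w {i} - (\<Sum>J\<in>{J\<in>Jfam e. i \<in> J}. w J) = 0"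
  proof (intro ballI)
    fix e I i assume h: "e \<in> E" "I \<in> e" "i \<in> I"
    have "w {i} - (\<Sum>J\<in>{J\<in>Jfam e. i \<in> J}. w J) =
      (\<Sum>s\<in>F. c s * s {i}) - (\<Sum>s\<in>F. c s * (\<Sum>J\<in>{J\<in>Jfam e. i \<in> J}. s J))"
      by (simp add: w swap_lin2)
    also have "\<dots> = (\<Sum>s\<in>F. c s * (s {i} - (\<Sum>J\<in>{J\<in>Jfam e. i \<in> J}. s J)))" by (rule lin_diff)
    also have "\<dots> = 0" using m4 h by simp
    finally show "w {i} - (\<Sum>J\<in>{J\<in>Jfam e. i \<in> J}. w J) = 0" .
  qed
  have a5: "\<forall>e e'. {e, e'} \<in> T \<longrightarrow> card (e \<inter> e') > 1 \<longrightarrow>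
        (\<forall>J0\<in>Jfam (e \<inter> e').
           (\<Sum>J\<in>{J\<in>Jfam e. J0 \<subseteq> J}. w J) - (\<Sum>J\<in>{J\<in>Jfam e'. J0 \<subseteq> J}. w J) = 0)"
  proof (intro allI impI ballI)
    fix e e' J0 assume h: "{e, e'} \<in> T" "card (e \<inter> e') > 1" "J0 \<in> Jfam (e \<inter> e')"
    have "(\<Sum>J\<in>{J\<in>Jfam e. J0 \<subseteq> J}. w J) - (\<Sum>J\<in>{J\<in>Jfam e'. J0 \<subseteq> J}. w J) =
      (\<Sum>s\<in>F. c s * (\<Sum>J\<in>{J\<in>Jfam e. J0 \<subseteq> J}. s J)) - (\<Sum>s\<in>F. c s * (\<Sum>J\<in>{J\<in>Jfam e'. J0 \<subseteq> J}. s J))"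
      by (simp add: w swap_lin2)
    also have "\<dots> = (\<Sum>s\<in>F. c s * ((\<Sum>J\<in>{J\<in>Jfam e. J0 \<subseteq> J}. s J) - (\<Sum>J\<in>{J\<in>Jfam e'. J0 \<subseteq> J}. s J)))"
      by (rule lin_diff)
    also have "\<dots> = 0" using m5 h by simp
    finally show "(\<Sum>J\<in>{J\<in>Jfam e. J0 \<subseteq> J}. w J) - (\<Sum>J\<in>{J\<in>Jfam e'. J0 \<subseteq> J}. w J) = 0" .
  qed
  show ?thesis unfolding MCdesc_def using a1 a2 a3 a4 a5 by (intro CollectI conjI)
qed

context
  fixes V :: "nat set set" and E :: "nat set set set"
  assumes pd: "pdisj V" and fV: "finite V" and fI: "\<forall>I\<in>V. finite I" and neI: "\<forall>I\<in>V. I \<noteq> {}"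
    and hE: "\<forall>e\<in>E. e \<subseteq> V \<and> 2 \<le> card e"
begin

lemma sK_marg:
  assumes K: "K \<in> Jfam V" and e: "e \<in> E" and J0: "J0 \<subseteq> \<Union>e"
  shows "(\<Sum>J\<in>{J\<in>Jfam e. J0 \<subseteq> J}. sK V E K J) = (if J0 \<subseteq> K then 1 else 0)"
proof -
  have eV: "e \<subseteq> V" using hE e by blast
  have JJ: "Jfam e \<subseteq> JH V E" using Jfam_JH[OF pd fV fI neI hE] e by blast
  have "(\<Sum>J\<in>{J\<in>Jfam e. J0 \<subseteq> J}. sK V E K J) = (\<Sum>J\<in>{J\<in>Jfam e. J0 \<subseteq> J}. if J \<subseteq> K then 1 else 0)"
  proof (rule sum.cong[OF refl])
    fix J assume "J \<in> {J\<in>Jfam e. J0 \<subseteq> J}"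
    then have "J \<in> JH V E" using JJ by blast
    then show "sK V E K J = (if J \<subseteq> K then 1 else 0)" by (simp add: sK_def)
  qed
  also have "\<dots> = (if J0 \<subseteq> K then 1 else 0)" by (rule indic_marg[OF pd fV fI neI hE K eV J0])
  finally show ?thesis .
qed

lemma sK_MCdesc:
  assumes K: "K \<in> Jfam V" and hT: "\<And>e e'. {e, e'} \<in> T \<Longrightarrow> e \<in> E \<and> e' \<in> E"
  shows "sK V E K \<in> MCdesc V E T"
proof -
  have a1: "\<forall>J. J \<notin> JH V E \<longrightarrow> sK V E K J = 0" by (simp add: sK_def)
  have a2: "\<forall>J\<in>JH V E. sK V E K J \<ge> 0" by (simp add: sK_def)
  have a3: "\<forall>I\<in>V. wsum (sK V E K) I = 1" using sK_wsum[OF pd fV fI neI hE K] by blast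
  have a4: "\<forall>e\<in>E. \<forall>I\<in>e. \<forall>i\<in>I. sK V E K {i} - (\<Sum>J\<in>{J\<in>Jfam e. i \<in> J}. sK V E K J) = 0"
  proof (intro ballI)
    fix e I i assume h: "e \<in> E" "I \<in> e" "i \<in> I"
    have IV: "I \<in> V" using hE h by blast
    have eqs: "{J\<in>Jfam e. i \<in> J} = {J\<in>Jfam e. {i} \<subseteq> J}" by auto
    have ie: "{i} \<subseteq> \<Union>e" using h by blast
    have "(\<Sum>J\<in>{J\<in>Jfam e. i \<in> J}. sK V E K J) = (if {i} \<subseteq> K then 1 else 0)"
      unfolding eqs by (rule sK_marg[OF K h(1) ie])
    moreover have "sK V E K {i} = (if {i} \<subseteq> K then 1 else 0)"
      using single_JH[OF pd fV fI neI hE IV h(3)] by (simp add: sK_def)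
    ultimately show "sK V E K {i} - (\<Sum>J\<in>{J\<in>Jfam e. i \<in> J}. sK V E K J) = 0" by simp
  qed
  have a5: "\<forall>e e'. {e, e'} \<in> T \<longrightarrow> card (e \<inter> e') > 1 \<longrightarrow>
        (\<forall>J0\<in>Jfam (e \<inter> e').
           (\<Sum>J\<in>{J\<in>Jfam e. J0 \<subseteq> J}. sK V E K J) - (\<Sum>J\<in>{J\<in>Jfam e'. J0 \<subseteq> J}. sK V E K J) = 0)"
  proof (intro allI impI ballI)
    fix e e' J0 assume h: "{e, e'} \<in> T" "card (e \<inter> e') > 1" "J0 \<in> Jfam (e \<inter> e')"
    have ee: "e \<in> E" "e' \<in> E" using hT[OF h(1)] by auto
    have "J0 \<subseteq> \<Union>(e \<inter> e')" using h(3) by (simp add: Jfam_def)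
    then have "J0 \<subseteq> \<Union>e" "J0 \<subseteq> \<Union>e'" by auto
    then show "(\<Sum>J\<in>{J\<in>Jfam e. J0 \<subseteq> J}. sK V E K J) - (\<Sum>J\<in>{J\<in>Jfam e'. J0 \<subseteq> J}. sK V E K J) = 0"
      using sK_marg[OF K ee(1)] sK_marg[OF K ee(2)] by simp
  qed
  show ?thesis unfolding MCdesc_def using a1 a2 a3 a4 a5 by (intro CollectI conjI)
qed

end

context
  fixes V :: "nat set set" and E :: "nat set set set"
  assumes pd: "pdisj V" and fV: "finite V" and fI: "\<forall>I\<in>V. finite I" and neI: "\<forall>I\<in>V. I \<noteq> {}"
    and hE: "\<forall>e\<in>E. e \<subseteq> V \<and> 2 \<le> card e"
begin

lemma vc:
  assumes w: "w \<in> MCdesc V E T" and e: "e \<in> E \<or> (\<exists>I\<in>V. e = {I})"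
  shows "\<forall>I\<in>e. \<forall>i\<in>I. mg e w {i} = w {i}"
proof (intro ballI)
  fix I i assume I: "I \<in> e" and i: "i \<in> I"
  from e show "mg e w {i} = w {i}"
  proof
    assume eE: "e \<in> E"
    have h: "w {i} - (\<Sum>J\<in>{J\<in>Jfam e. i \<in> J}. w J) = 0" by (rule MCdescD(4)[OF w, rule_format, OF eE I i])
    have eq: "{K\<in>Jfam e. {i} \<subseteq> K} = {J\<in>Jfam e. i \<in> J}" by auto
    show ?thesis unfolding mg_def eq using h by linarith
  next
    assume "\<exists>I\<in>V. e = {I}"
    then obtain I' where eI: "e = {I'}" by blast
    then have II: "I = I'" using I by simp
    have "{K\<in>Jfam e. {i} \<subseteq> K} = {{i}}" using i unfolding eI II Jfam_single by auto
    then show ?thesis unfolding mg_def by simp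
  qed
qed

lemma sum1:
  assumes w: "w \<in> MCdesc V E T" and e: "e \<subseteq> V" "e \<noteq> {}" and v: "\<forall>I\<in>e. \<forall>i\<in>I. mg e w {i} = w {i}"
  shows "sum w (Jfam e) = 1"
proof -
  obtain I where I: "I \<in> e" using e by blast
  have IV: "I \<in> V" using I e by blast
  have fe: "finite e" using finite_subset[OF e(1) fV] .
  have fie: "\<forall>I\<in>e. finite I" using fI e by blast
  have "sum w (Jfam e) = mg e w {}" unfolding mg_def by simp
  also have "\<dots> = sum (mg e w) {J\<in>Jfam {I}. {} \<subseteq> J}"
    by (rule mg_trans[OF fe fie]) (use I in \<open>auto simp: Jfam_empty\<close>)
  also have "\<dots> = sum (mg e w) ((\<lambda>i. {i}) ` I)" by (simp add: Jfam_single)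
  also have "\<dots> = (\<Sum>i\<in>I. mg e w {i})" by (simp add: sum.reindex inj_on_def)
  also have "\<dots> = (\<Sum>i\<in>I. w {i})" using v I by simp
  also have "\<dots> = 1" using MCdescD(3)[OF w] IV by (simp add: wsum_def)
  finally show ?thesis .
qed

lemma sum1': "w \<in> MCdesc V E T \<Longrightarrow> e \<in> E \<or> (\<exists>I\<in>V. e = {I}) \<Longrightarrow> sum w (Jfam e) = 1"
proof -
  assume w: "w \<in> MCdesc V E T" and e: "e \<in> E \<or> (\<exists>I\<in>V. e = {I})"
  have ev: "e \<subseteq> V \<and> e \<noteq> {}" by (rule edge_sub[OF pd fV fI neI hE e])
  show ?thesis using sum1[OF w _ _ vc[OF w e]] ev by blast
qed

lemma cons_edge:
  assumes w: "w \<in> MCdesc V E T" and tr: "is_tree E T" and t: "{e, e'} \<in> T"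
  shows "\<forall>J0\<in>Jfam (e \<inter> e'). mg e w J0 = mg e' w J0"
proof
  fix J0 assume J0: "J0 \<in> Jfam (e \<inter> e')"
  have ee: "e \<in> E" "e' \<in> E" using tree_edge[OF tr t] by auto
  have eV: "e \<subseteq> V" using hE ee by blast
  have fin: "finite (e \<inter> e')" using finite_subset[OF eV fV] by blast
  consider "card (e \<inter> e') > 1" | "card (e \<inter> e') = 1" | "card (e \<inter> e') = 0" by linarith
  then show "mg e w J0 = mg e' w J0"
  proof cases
    case 1
    have "(\<Sum>J\<in>{J\<in>Jfam e. J0 \<subseteq> J}. w J) - (\<Sum>J\<in>{J\<in>Jfam e'. J0 \<subseteq> J}. w J) = 0"
      by (rule MCdescD(5)[OF w, rule_format, OF t 1 J0])
    then show ?thesis unfolding mg_def by simp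
  next
    case 2
    then obtain I where I: "e \<inter> e' = {I}" by (rule card_1_singletonE)
    then obtain i where i: "i \<in> I" "J0 = {i}" using J0 by (auto simp: Jfam_single)
    have "I \<in> e" "I \<in> e'" using I by auto
    then show ?thesis using vc[OF w] ee i by auto
  next
    case 3
    then have "e \<inter> e' = {}" using fin by simp
    then have "J0 = {}" using J0 by (simp add: Jfam_empty)
    moreover have "mg e w {} = 1" "mg e' w {} = 1" using sum1'[OF w] ee unfolding mg_def by auto
    ultimately show ?thesis by simp
  qed
qed

end

lemma take_mem: "X \<in> set (take k xs) \<Longrightarrow> \<exists>i<k. i < length xs \<and> X = xs ! i"
proof -
  assume "X \<in> set (take k xs)"
  then obtain i where "i < length (take k xs)" "X = take k xs ! i" by (auto simp: in_set_conv_nth)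
  then show ?thesis by auto
qed

lemma take_mem2: "j < k \<Longrightarrow> j < length xs \<Longrightarrow> xs ! j \<in> set (take k xs)"
proof -
  assume a: "j < k" "j < length xs"
  then have "take k xs ! j = xs ! j" "j < length (take k xs)" by auto
  then show ?thesis by (metis nth_mem)
qed

context
  fixes V :: "nat set set" and E :: "nat set set set"
  assumes pd: "pdisj V" and fV: "finite V" and fI: "\<forall>I\<in>V. finite I" and neI: "\<forall>I\<in>V. I \<noteq> {}"
    and hE: "\<forall>e\<in>E. e \<subseteq> V \<and> 2 \<le> card e"
begin

lemma dist:
  assumes w: "w \<in> MCdesc V E T" and jt: "is_join_tree E T"
  shows "\<exists>P. (\<forall>K\<in>Jfam V. P K \<ge> 0) \<and> sum P (Jfam V) = 1 \<and> (\<forall>J\<in>JH V E. mg V P J = w J)"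
proof -
  have tr: "is_tree E T" using jt by (simp add: is_join_tree_def)
  have "\<exists>es. set es = E \<and>
     (\<forall>k<length es. 0 < k \<longrightarrow> (\<exists>j<k. {es!k, es!j} \<in> T \<and> (\<forall>i<k. es!k \<inter> es!i \<subseteq> es!j)))"
  proof (cases "E = {}")
    case True then show ?thesis by (intro exI[of _ "[]"]) simp
  next
    case False then show ?thesis by (rule join_order[OF jt])
  qed
  then obtain es where es1: "set es = E" and
    es2: "\<forall>k<length es. 0 < k \<longrightarrow> (\<exists>j<k. {es!k, es!j} \<in> T \<and> (\<forall>i<k. es!k \<inter> es!i \<subseteq> es!j))"
    by (elim exE conjE) (rule that; assumption)
  obtain vs where vs1: "set vs = V" and vs2: "distinct vs"
    using finite_distinct_list[OF fV] by blast
  define al where "al = es @ map (\<lambda>I. {I}) vs"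
  have kinds: "e \<in> E \<or> (\<exists>I\<in>V. e = {I})" if "e \<in> set al" for e
    using that es1 vs1 unfolding al_def by auto
  have h1: "\<forall>e\<in>set al. e \<subseteq> V"
    using kinds edge_sub[OF pd fV fI neI hE] by blast
  have h2: "\<forall>e\<in>set al. \<forall>J\<in>Jfam e. w J \<ge> 0"
  proof (intro ballI)
    fix e J assume e: "e \<in> set al" and J: "J \<in> Jfam e"
    have "J \<in> JH V E" using Jfam_JH[OF pd fV fI neI hE kinds[OF e]] J by blast
    then show "w J \<ge> 0" using MCdescD(2)[OF w] by blast
  qed
  have h3: "\<forall>e\<in>set al. sum w (Jfam e) = 1"
    using sum1'[OF pd fV fI neI hE w] kinds by blast
  have h4: "\<forall>k<length al. al!k \<inter> \<Union>(set (take k al)) = {} \<or>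
        (\<exists>j<k. al!k \<inter> \<Union>(set (take k al)) \<subseteq> al!j \<and>
           (\<forall>J0\<in>Jfam (al!k \<inter> \<Union>(set (take k al))). mg (al!k) w J0 = mg (al!j) w J0))"
  proof (intro allI impI)
    fix k assume k: "k < length al"
    define S where "S = al!k \<inter> \<Union>(set (take k al))"
    have "S = {} \<or> (\<exists>j<k. S \<subseteq> al!j \<and> (\<forall>J0\<in>Jfam S. mg (al!k) w J0 = mg (al!j) w J0))"
    proof (cases "k < length es")
      case True
      have ak: "al!k = es!k" using True by (simp add: al_def nth_append)
      have tk: "take k al = take k es" using True by (simp add: al_def)
      show ?thesis
      proof (cases "k = 0")
        case True
        then show ?thesis by (simp add: S_def)
      next
        case False
        then have k0: "0 < k" by simp
        from es2[rule_format, OF True k0] obtain j where j: "j < k" "{es!k, es!j} \<in> T"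
          "\<forall>i<k. es!k \<inter> es!i \<subseteq> es!j" by (elim exE conjE) (rule that; assumption)
        have jl: "j < length es" using j(1) True by simp
        have aj: "al!j = es!j" using jl by (simp add: al_def nth_append)
        have Seq: "S = es!k \<inter> es!j"
        proof
          show "S \<subseteq> es!k \<inter> es!j"
          proof
            fix x assume "x \<in> S"
            then have x: "x \<in> es!k" "x \<in> \<Union>(set (take k es))" unfolding S_def ak tk by auto
            then obtain X where X: "X \<in> set (take k es)" "x \<in> X" by blast
            from take_mem[OF X(1)] obtain i where i: "i < k" "X = es!i" by blast
            then have "x \<in> es!k \<inter> es!i" using x X by simp
            then have "x \<in> es!j" using j(3) i(1) by blast
            then show "x \<in> es!k \<inter> es!j" using x by simp
          qed
          have "es!j \<in> set (take k es)" by (rule take_mem2[OF j(1) jl])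
          then show "es!k \<inter> es!j \<subseteq> S" unfolding S_def ak tk by blast
        qed
        have c: "\<forall>J0\<in>Jfam (es!k \<inter> es!j). mg (es!k) w J0 = mg (es!j) w J0"
          by (rule cons_edge[OF pd fV fI neI hE w tr j(2)])
        have "S \<subseteq> al!j" unfolding Seq aj by blast
        moreover have "\<forall>J0\<in>Jfam S. mg (al!k) w J0 = mg (al!j) w J0" unfolding Seq ak aj by (rule c)
        ultimately show ?thesis using j(1) by blast
      qed
    next
      case False
      define m where "m = k - length es"
      have km: "k = length es + m" using False m_def by simp
      have ml: "m < length vs" using k km by (simp add: al_def)
      define I where "I = vs!m"
      have IV: "I \<in> V" using ml vs1 I_def by auto
      have ak: "al!k = {I}" using km ml I_def by (simp add: al_def nth_append)
      have tk: "take k al = es @ take m (map (\<lambda>I. {I}) vs)" using km by (simp add: al_def)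
      have "S \<subseteq> {I}" unfolding S_def ak by blast
      then consider "S = {}" | "S = {I}" by blast
      then show ?thesis
      proof cases
        case 1 then show ?thesis by simp
      next
        case 2
        then have "I \<in> \<Union>(set (take k al))" unfolding S_def by blast
        then obtain X where X: "X \<in> set (take k al)" "I \<in> X" by blast
        have Xes: "X \<in> set es"
        proof (rule ccontr)
          assume "X \<notin> set es"
          then have "X \<in> set (take m (map (\<lambda>I. {I}) vs))" using X(1) tk by simp
          from take_mem[OF this] obtain i where i: "i < m" "i < length (map (\<lambda>I. {I}) vs)"
            "X = map (\<lambda>I. {I}) vs ! i" by blast
          then have "X = {vs!i}" by simp
          then have "vs!i = vs!m" using X(2) I_def by simp
          then have "i = m" using vs2 i(2) ml by (simp add: nth_eq_iff_index_eq)
          then show False using i(1) by simp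
        qed
        then obtain j where j: "j < length es" "X = es!j" by (auto simp: in_set_conv_nth)
        have jk: "j < k" using j(1) km by simp
        have aj: "al!j = es!j" using j(1) by (simp add: al_def nth_append)
        have XE: "X \<in> E" using Xes es1 by simp
        have "\<forall>J0\<in>Jfam S. mg (al!k) w J0 = mg (al!j) w J0"
        proof
          fix J0 assume "J0 \<in> Jfam S"
          then obtain i where i: "i \<in> I" "J0 = {i}" using 2 by (auto simp: Jfam_single)
          have "mg {I} w {i} = w {i}" using vc[OF pd fV fI neI hE w, of "{I}"] IV i by blast
          moreover have "mg X w {i} = w {i}" using vc[OF pd fV fI neI hE w, of X] XE X(2) i by blast
          ultimately show "mg (al!k) w J0 = mg (al!j) w J0" using ak aj j i by simp
        qed
        moreover have "S \<subseteq> al!j" using 2 X(2) aj j by simp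
        ultimately show ?thesis using jk by blast
      qed
    qed
    then show "al!k \<inter> \<Union>(set (take k al)) = {} \<or>
        (\<exists>j<k. al!k \<inter> \<Union>(set (take k al)) \<subseteq> al!j \<and>
           (\<forall>J0\<in>Jfam (al!k \<inter> \<Union>(set (take k al))). mg (al!k) w J0 = mg (al!j) w J0))"
      unfolding S_def .
  qed
  from list_glue[OF pd fV fI h1 h2 h3 h4] obtain P where
    P: "\<forall>K\<in>Jfam (\<Union>(set al)). P K \<ge> 0" "mg (\<Union>(set al)) P {} = 1"
       "\<forall>e\<in>set al. \<forall>J\<in>Jfam e. mg (\<Union>(set al)) P J = w J"
    by (elim exE conjE) (rule that; assumption)
  have U: "\<Union>(set al) = V"
  proof
    show "\<Union>(set al) \<subseteq> V" using h1 by blast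
    show "V \<subseteq> \<Union>(set al)"
    proof
      fix I assume "I \<in> V"
      then have "{I} \<in> set al" using vs1 unfolding al_def by auto
      then show "I \<in> \<Union>(set al)" by blast
    qed
  qed
  have "\<forall>J\<in>JH V E. mg V P J = w J"
  proof
    fix J assume "J \<in> JH V E"
    from JH_cases[OF pd fV fI neI hE this] obtain e where
      e: "e \<in> E \<or> (\<exists>I\<in>V. e = {I})" "J \<in> Jfam e" by blast
    have "e \<in> set al" using e(1) es1 vs1 unfolding al_def by auto
    then show "mg V P J = w J" using P(3) e(2) U by auto
  qed
  moreover have "sum P (Jfam V) = 1" using P(2) U unfolding mg_def by simp
  ultimately show ?thesis using P(1) U by auto
qed

end

theorem theorem1p1:
  fixes n :: nat and V :: "nat set set" and E :: "nat set set set"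
    and T :: "nat set set set set"
  assumes "n \<ge> 1"
    and "partition_ge2 n V"
    and "hyperedges_ok V E"
    and "alpha_acyclic V E"
    and "is_join_tree E T"
  shows "MC V E = MCdesc V E T"
proof -
  have UV: "\<Union>V = {1..n}" and c2: "\<forall>I\<in>V. card I \<ge> 2"
    and dj: "\<forall>I\<in>V. \<forall>I'\<in>V. I \<noteq> I' \<longrightarrow> I \<inter> I' = {}"
    using assms(2) unfolding partition_ge2_def by auto
  have pd: "pdisj V" using dj by (simp add: pdisj_def)
  have "V \<subseteq> Pow {1..n}" using UV by blast
  then have fV: "finite V" by (rule finite_subset) simp
  have fI: "\<forall>I\<in>V. finite I"
  proof
    fix I assume "I \<in> V"
    then have "I \<subseteq> {1..n}" using UV by blast
    then show "finite I" by (rule finite_subset) simp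
  qed
  have neI: "\<forall>I\<in>V. I \<noteq> {}"
  proof
    fix I assume "I \<in> V"
    then have "card I \<ge> 2" using c2 by blast
    then show "I \<noteq> {}" by auto
  qed
  have hE: "\<forall>e\<in>E. e \<subseteq> V \<and> 2 \<le> card e" using assms(3) unfolding hyperedges_ok_def by blast
  have jt: "is_join_tree E T" by (rule assms(5))
  have tr: "is_tree E T" using jt by (simp add: is_join_tree_def)
  have hT: "\<And>e e'. {e, e'} \<in> T \<Longrightarrow> e \<in> E \<and> e' \<in> E" using tree_edge[OF tr] by blast
  have fJ: "finite (Jfam V)" using Jfam_finite fV fI by blast
  show ?thesis
  proof
    show "MC V E \<subseteq> MCdesc V E T"
    proof
      fix w assume "w \<in> MC V E"
      then obtain F c where F: "finite F" "F \<subseteq> SH V E" "F \<noteq> {}" "\<forall>s\<in>F. c s \<ge> 0"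
        "sum c F = 1" "w = (\<lambda>x. \<Sum>s\<in>F. c s * s x)"
        unfolding MC_def conv_fun_def by blast
      have "F \<subseteq> MCdesc V E T"
      proof
        fix s assume "s \<in> F"
        then have "s \<in> SH V E" using F(2) by blast
        from SH_sK[OF pd fV fI neI hE this] obtain K where "K \<in> Jfam V" "s = sK V E K" by blast
        then show "s \<in> MCdesc V E T" using sK_MCdesc[OF pd fV fI neI hE _ hT] by blast
      qed
      then show "w \<in> MCdesc V E T" using MCdesc_convex F(5,6,4) by blast
    qed
    show "MCdesc V E T \<subseteq> MC V E"
    proof
      fix w assume w: "w \<in> MCdesc V E T"
      from dist[OF pd fV fI neI hE w jt] obtain P where
        P: "\<forall>K\<in>Jfam V. P K \<ge> 0" "sum P (Jfam V) = 1" "\<forall>J\<in>JH V E. mg V P J = w J"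
        by (elim exE conjE) (rule that; assumption)
      define Fs where "Fs = sK V E ` Jfam V"
      define c where "c = (\<lambda>y. sum P {K\<in>Jfam V. sK V E K = y})"
      have a1: "finite Fs" unfolding Fs_def using fJ by simp
      have a2: "Fs \<subseteq> SH V E" unfolding Fs_def using sK_in_SH[OF pd fV fI neI hE] by blast
      have "Jfam V \<noteq> {}" using P(2) by auto
      then have a3: "Fs \<noteq> {}" unfolding Fs_def by simp
      have a4: "\<forall>s\<in>Fs. c s \<ge> 0" unfolding c_def using P(1) by (auto intro: sum_nonneg)
      have a5: "sum c Fs = 1"
        unfolding c_def Fs_def using sum.image_gen[OF fJ, of P "sK V E"] P(2) by simp
      have a6: "w = (\<lambda>x. \<Sum>s\<in>Fs. c s * s x)"
      proof
        fix x
        have "(\<Sum>s\<in>Fs. c s * s x) = (\<Sum>s\<in>Fs. \<Sum>K\<in>{K\<in>Jfam V. sK V E K = s}. P K * sK V E K x)"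
        proof (rule sum.cong[OF refl])
          fix s assume "s \<in> Fs"
          have "c s * s x = (\<Sum>K\<in>{K\<in>Jfam V. sK V E K = s}. P K * s x)"
            unfolding c_def by (rule sum_distrib_right)
          also have "\<dots> = (\<Sum>K\<in>{K\<in>Jfam V. sK V E K = s}. P K * sK V E K x)"
            by (rule sum.cong) auto
          finally show "c s * s x = (\<Sum>K\<in>{K\<in>Jfam V. sK V E K = s}. P K * sK V E K x)" .
        qed
        also have "\<dots> = (\<Sum>K\<in>Jfam V. P K * sK V E K x)"
          unfolding Fs_def using sum.image_gen[OF fJ, of "\<lambda>K. P K * sK V E K x" "sK V E"] by simp
        also have "\<dots> = w x"
        proof (cases "x \<in> JH V E")
          case True
          have "(\<Sum>K\<in>Jfam V. P K * sK V E K x) = (\<Sum>K\<in>Jfam V. if x \<subseteq> K then P K else 0)"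
            by (rule sum.cong) (use True in \<open>auto simp: sK_def\<close>)
          also have "\<dots> = sum P {K\<in>Jfam V. x \<subseteq> K}" using sum.inter_filter[OF fJ, of P] by simp
          also have "\<dots> = w x" using P(3) True unfolding mg_def by blast
          finally show ?thesis .
        next
          case False
          have "(\<Sum>K\<in>Jfam V. P K * sK V E K x) = 0" using False by (simp add: sK_def)
          moreover have "w x = 0" using MCdescD(1)[OF w] False by blast
          ultimately show ?thesis by simp
        qed
        finally show "w x = (\<Sum>s\<in>Fs. c s * s x)" by simp
      qed
      show "w \<in> MC V E" unfolding MC_def conv_fun_def
        using a1 a2 a3 a4 a5 a6 by blast
    qed
  qed
qed

end
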